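(* Let $1\le p\le\infty$, $E=\mathcal{L}^p(I)$ and $b\in E$. If $\alpha_n(t)\in\{\Lambda,-\Lambda\}$ for all $n$ and all $t\in I$, then $\|0*_Tb\|_p=\Lambda\|0*_Tb-b\|_p$. If the maps $\alpha_n$ are constant functions, then $\|0*_Tb\|_p\le\Lambda\|0*_Tb-b\|_p$ for every $b\in E$, and consequently $\|\mathcal{P}_0^1\|\le\Lambda\|\mathcal{P}_0^1-I\|$, where $\mathcal{P}_0^1(b):=0*_Tb$, $I$ is the identity on $E$ and $\|\cdot\|$ is the operator norm. For $0<p<1$ the same holds with $\|g\|_p$ interpreted as $\int_I|g|^p\,dx$ and $\Lambda$ replaced by $\Lambda^p$.
   Context: Let $N\ge 2$, $I=[x_0,x_N]$, $\Delta: x_0<\dots<x_N$ a partition, $L_n(x)=a_nx+b_n$ affine with $L_n(x_0)=x_{n-1}$, $L_n(x_N)=x_n$, $I_1=[x_0,x_1]$, $I_n=(x_{n-1},x_n]$ for $n\ge2$, and $\alpha=(\alpha_1,\dots,\alpha_N)\in(\mathcal{L}^\infty(I))^N$ with $\Lambda:=\operatorname{ess\,sup}\{|\alpha_n(x)|:x\in I,n=1,\dots,N\}<1$. For $f,b\in E$, $f*_Tb$ is the unique fixed point in $E$ of the contraction $Tg(x):=f(x)+\alpha_n(L_n^{-1}(x))(g-b)(L_n^{-1}(x))$, $x\in I_n$; $0$ is the null function. $\mathcal{P}_0^1$ is linear. *)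

theory Defs
  imports "HOL-Probability.Essential_Supremum" "HOL-Analysis.Analysis"
begin

text \<open>Partition x 0 < ... < x N, I = [x 0, x N], measure = Lebesgue measure on I.
  The affine maps are L_n t = a n * t + c n (so L_n^{-1} y = (y - c n) / a n).\<close>

definition Iset :: "(nat \<Rightarrow> real) \<Rightarrow> nat \<Rightarrow> real set" where
  "Iset x n = (if n = 1 then {x 0..x 1} else {x (n - 1)<..x n})"

definition Linv :: "(nat \<Rightarrow> real) \<Rightarrow> (nat \<Rightarrow> real) \<Rightarrow> nat \<Rightarrow> real \<Rightarrow> real" where
  "Linv a c n y = (y - c n) / a n"

definition Top :: "nat \<Rightarrow> (nat \<Rightarrow> real) \<Rightarrow> (nat \<Rightarrow> real) \<Rightarrow> (nat \<Rightarrow> real)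
    \<Rightarrow> (nat \<Rightarrow> real \<Rightarrow> real) \<Rightarrow> (real \<Rightarrow> real) \<Rightarrow> (real \<Rightarrow> real)
    \<Rightarrow> (real \<Rightarrow> real) \<Rightarrow> real \<Rightarrow> real" where
  "Top N x a c \<alpha> f b g y = f y + (\<Sum>n\<in>{1..N}. indicator (Iset x n) y *
      (\<alpha> n (Linv a c n y) * (g (Linv a c n y) - b (Linv a c n y))))"

text \<open>L^p space (as a set of representatives) for 0 < p <= infinity.\<close>
definition Lp_space :: "ereal \<Rightarrow> real measure \<Rightarrow> (real \<Rightarrow> real) set" where
  "Lp_space p M = {g. g \<in> borel_measurable M \<and>
     (if p = \<infinity> then esssup M (\<lambda>t. ereal \<bar>g t\<bar>) < \<infinity>
      else integrable M (\<lambda>t. \<bar>g t\<bar> powr real_of_ereal p))}"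

definition Lp_size :: "ereal \<Rightarrow> real measure \<Rightarrow> (real \<Rightarrow> real) \<Rightarrow> real" where
  "Lp_size p M g = (if p = \<infinity> then real_of_ereal (esssup M (\<lambda>t. ereal \<bar>g t\<bar>))
     else if 1 \<le> p then (\<integral>t. \<bar>g t\<bar> powr real_of_ereal p \<partial>M) powr (1 / real_of_ereal p)
     else (\<integral>t. \<bar>g t\<bar> powr real_of_ereal p \<partial>M))"

definition is_fixpt :: "nat \<Rightarrow> (nat \<Rightarrow> real) \<Rightarrow> (nat \<Rightarrow> real) \<Rightarrow> (nat \<Rightarrow> real)
    \<Rightarrow> (nat \<Rightarrow> real \<Rightarrow> real) \<Rightarrow> ereal \<Rightarrow> real measure
    \<Rightarrow> (real \<Rightarrow> real) \<Rightarrow> (real \<Rightarrow> real) \<Rightarrow> (real \<Rightarrow> real) \<Rightarrow> bool" where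
  "is_fixpt N x a c \<alpha> p M f b g \<longleftrightarrow>
     g \<in> Lp_space p M \<and> (AE y in M. Top N x a c \<alpha> f b g y = g y)"

text \<open>f *_T b: (a representative of) the unique fixed point.\<close>
definition starT :: "nat \<Rightarrow> (nat \<Rightarrow> real) \<Rightarrow> (nat \<Rightarrow> real) \<Rightarrow> (nat \<Rightarrow> real)
    \<Rightarrow> (nat \<Rightarrow> real \<Rightarrow> real) \<Rightarrow> ereal \<Rightarrow> real measure
    \<Rightarrow> (real \<Rightarrow> real) \<Rightarrow> (real \<Rightarrow> real) \<Rightarrow> (real \<Rightarrow> real)" where
  "starT N x a c \<alpha> p M f b = (SOME g. is_fixpt N x a c \<alpha> p M f b g)"

definition op_size :: "ereal \<Rightarrow> real measure \<Rightarrow> ((real \<Rightarrow> real) \<Rightarrow> (real \<Rightarrow> real)) \<Rightarrow> real" where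
  "op_size p M P = Sup {Lp_size p M (P b) | b. b \<in> Lp_space p M \<and> Lp_size p M b \<le> 1}"

end

theory Submission
  imports Defs
begin


definition Aop :: "nat \<Rightarrow> (nat \<Rightarrow> real) \<Rightarrow> (nat \<Rightarrow> real) \<Rightarrow> (nat \<Rightarrow> real)
    \<Rightarrow> (nat \<Rightarrow> real \<Rightarrow> real) \<Rightarrow> (real \<Rightarrow> real) \<Rightarrow> real \<Rightarrow> real" where
  "Aop N x a c \<alpha> g y = (\<Sum>n\<in>{1..N}. indicator (Iset x n) y *
      (\<alpha> n (Linv a c n y) * g (Linv a c n y)))"

lemma Top_Aop: "Top N x a c \<alpha> f b g y = f y + Aop N x a c \<alpha> (\<lambda>t. g t - b t) y"
  unfolding Top_def Aop_def by simp

locale PS =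
  fixes N :: nat and x a c :: "nat \<Rightarrow> real" and \<alpha> :: "nat \<Rightarrow> real \<Rightarrow> real"
  assumes N2: "2 \<le> N"
    and part: "\<And>i. i < N \<Longrightarrow> x i < x (Suc i)"
    and L0: "\<And>n. n \<in> {1..N} \<Longrightarrow> a n * x 0 + c n = x (n - 1)"
    and LN: "\<And>n. n \<in> {1..N} \<Longrightarrow> a n * x N + c n = x n"
begin

abbreviation "I \<equiv> {x 0..x N}"
abbreviation "M \<equiv> lebesgue_on {x 0..x N}"
abbreviation "A \<equiv> Aop N x a c \<alpha>"

lemma x_less: "i < j \<Longrightarrow> j \<le> N \<Longrightarrow> x i < x j"
proof (induction j)
  case 0 then show ?case by simp
next
  case (Suc j)
  then show ?case using part[of j] by (cases "i = j") auto
qed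

lemma x_le: "i \<le> j \<Longrightarrow> j \<le> N \<Longrightarrow> x i \<le> x j"
  using x_less[of i j] by (cases "i = j") auto

lemma I_pos: "x 0 < x N" using x_less[of 0 N] N2 by simp

lemma a_eq: "n \<in> {1..N} \<Longrightarrow> a n = (x n - x (n - 1)) / (x N - x 0)"
  using L0[of n] LN[of n] I_pos by (auto simp: field_simps)

lemma a_pos: "n \<in> {1..N} \<Longrightarrow> 0 < a n"
  using a_eq[of n] x_less[of "n - 1" n] I_pos by auto

lemma sum_a: "(\<Sum>n\<in>{1..N}. a n) = 1"
proof -
  have tel: "(\<Sum>n\<in>{1..k}. x n - x (n - 1)) = x k - x 0" for k
    by (induction k) (auto simp: sum.atLeast1_atMost_eq)
  have "(\<Sum>n\<in>{1..N}. a n) = (\<Sum>n\<in>{1..N}. (x n - x (n - 1)) / (x N - x 0))"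
    by (rule sum.cong) (auto simp: a_eq)
  also have "\<dots> = (x N - x 0) / (x N - x 0)" by (simp only: sum_divide_distrib[symmetric] tel)
  finally show ?thesis using I_pos by simp
qed

lemma Iset_sub: "n \<in> {1..N} \<Longrightarrow> Iset x n \<subseteq> I"
proof -
  assume n: "n \<in> {1..N}"
  then have "x 0 \<le> x (n - 1)" "x n \<le> x N" using x_le[of 0 "n - 1"] x_le[of n N] by auto
  then show ?thesis by (auto simp: Iset_def)
qed

lemma Iset_cover: "y \<in> I \<Longrightarrow> \<exists>m\<in>{1..N}. y \<in> Iset x m"
proof -
  have "1 \<le> k \<Longrightarrow> k \<le> N \<Longrightarrow> y \<in> {x 0..x k} \<Longrightarrow> \<exists>m\<in>{1..k}. y \<in> Iset x m" for k
  proof (induction k)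
    case 0 then show ?case by simp
  next
    case (Suc k)
    show ?case
    proof (cases "k = 0")
      case True then show ?thesis using Suc by (auto simp: Iset_def)
    next
      case False
      show ?thesis
      proof (cases "y \<le> x k")
        case True
        then show ?thesis using Suc False by force
      next
        case f2: False
        then have "y \<in> Iset x (Suc k)" using Suc False by (auto simp: Iset_def)
        then show ?thesis by auto
      qed
    qed
  qed
  then show "y \<in> I \<Longrightarrow> ?thesis" using N2 by auto
qed

lemma Iset_disj: "m \<in> {1..N} \<Longrightarrow> n \<in> {1..N} \<Longrightarrow> y \<in> Iset x m \<Longrightarrow> y \<in> Iset x n \<Longrightarrow> m = n"
proof (rule ccontr)
  assume h: "m \<in> {1..N}" "n \<in> {1..N}" "y \<in> Iset x m" "y \<in> Iset x n" "m \<noteq> n"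
  have *: "m < n \<Longrightarrow> m \<in> {1..N} \<Longrightarrow> n \<in> {1..N} \<Longrightarrow> y \<in> Iset x m \<Longrightarrow> y \<in> Iset x n \<Longrightarrow> False" for m n
  proof -
    assume h: "m < n" "m \<in> {1..N}" "n \<in> {1..N}" "y \<in> Iset x m" "y \<in> Iset x n"
    then have "x m \<le> x (n - 1)" using x_le[of m "n - 1"] by auto
    moreover have "y \<le> x m" using h(4) by (auto simp: Iset_def split: if_splits)
    moreover have "x (n - 1) < y" using h by (auto simp: Iset_def split: if_splits)
    ultimately show False by simp
  qed
  show False using h *[of m n] *[of n m] by (cases "m < n") auto
qed

lemma sum_ind: "m \<in> {1..N} \<Longrightarrow> y \<in> Iset x m \<Longrightarrow>
   (\<Sum>n\<in>{1..N}. indicator (Iset x n) y * (G n :: 'b::comm_semiring_1)) = G m"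
proof -
  assume m: "m \<in> {1..N}" "y \<in> Iset x m"
  have "(\<Sum>n\<in>{1..N}. indicator (Iset x n) y * G n) = indicator (Iset x m) y * G m
     + (\<Sum>n\<in>{1..N} - {m}. indicator (Iset x n) y * G n)"
    by (rule sum.remove) (use m in auto)
  also have "(\<Sum>n\<in>{1..N} - {m}. indicator (Iset x n) y * G n) = 0"
  proof (rule sum.neutral, rule ballI)
    fix n assume "n \<in> {1..N} - {m}"
    then have "y \<notin> Iset x n" using Iset_disj[of m n y] m by auto
    then show "indicator (Iset x n) y * G n = 0" by simp
  qed
  finally show ?thesis using m by simp
qed

lemma Linv_in: "n \<in> {1..N} \<Longrightarrow> y \<in> Iset x n \<Longrightarrow> Linv a c n y \<in> I"
proof -
  assume n: "n \<in> {1..N}" "y \<in> Iset x n"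
  then have y: "x (n - 1) \<le> y" "y \<le> x n" by (auto simp: Iset_def split: if_splits)
  have an: "a n > 0" using a_pos n by auto
  have "x 0 \<le> (y - c n) / a n" using y L0[OF n(1)] an by (simp add: field_simps)
  moreover have "(y - c n) / a n \<le> x N" using y LN[OF n(1)] an by (simp add: field_simps)
  ultimately show ?thesis by (simp add: Linv_def)
qed

lemma Linv_in_iff: "n \<in> {1..N} \<Longrightarrow> Linv a c n y \<in> I \<longleftrightarrow> y \<in> {x (n - 1)..x n}"
proof -
  assume n: "n \<in> {1..N}"
  have an: "a n > 0" using a_pos n by auto
  have "x 0 \<le> (y - c n) / a n \<longleftrightarrow> x (n - 1) \<le> y" using L0[OF n] an by (auto simp: field_simps)
  moreover have "(y - c n) / a n \<le> x N \<longleftrightarrow> y \<le> x n" using LN[OF n] an by (auto simp: field_simps)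
  ultimately show ?thesis by (auto simp: Linv_def)
qed

lemma A_at: "m \<in> {1..N} \<Longrightarrow> y \<in> Iset x m \<Longrightarrow> A g y = \<alpha> m (Linv a c m y) * g (Linv a c m y)"
  unfolding Aop_def by (rule sum_ind)

end


lemma aff_meas: "u \<noteq> 0 \<Longrightarrow> (\<lambda>y::real. t + u * y) \<in> lebesgue \<rightarrow>\<^sub>M lebesgue"
  using lebesgue_affine_measurable[where c="\<lambda>_::real. u" and t=t] by simp

lemma nn_aff:
  assumes F: "F \<in> borel_measurable lebesgue" and u: "u > 0"
  shows "(\<integral>\<^sup>+y. F (t + u * y) \<partial>lebesgue) = ennreal (1/u) * (\<integral>\<^sup>+y. F y \<partial>lebesgue)"
proof -
  have "(\<integral>\<^sup>+y. F y \<partial>lebesgue) = ennreal u * (\<integral>\<^sup>+y. F (t + u * y) \<partial>lebesgue)"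
    using nn_integral_real_affine_lebesgue[OF F, of u t] u by simp
  then have "ennreal (1/u) * (\<integral>\<^sup>+y. F y \<partial>lebesgue) = (ennreal (1/u) * ennreal u) * (\<integral>\<^sup>+y. F (t + u * y) \<partial>lebesgue)"
    by (simp add: mult.assoc)
  also have "ennreal (1/u) * ennreal u = 1" using u by (simp add: ennreal_mult[symmetric])
  finally show ?thesis by simp
qed

context PS begin

lemma I_sets[simp]: "I \<in> sets lebesgue" by simp

lemma Iset_sets[simp]: "Iset x n \<in> sets lebesgue"
  by (simp add: Iset_def)

lemma Linv_aff: "n \<in> {1..N} \<Longrightarrow> Linv a c n y = (- c n / a n) + (1 / a n) * y"
  using a_pos[of n] by (simp add: Linv_def field_simps)

lemma ext_meas_enn: "(f :: real \<Rightarrow> ennreal) \<in> borel_measurable M \<Longrightarrow> (\<lambda>t. f t * indicator I t) \<in> borel_measurable lebesgue"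
  using borel_measurable_restrict_space_iff_ennreal[of I lebesgue f] by simp

lemma ext_meas_real: "(f :: real \<Rightarrow> real) \<in> borel_measurable M \<Longrightarrow> (\<lambda>t. f t * indicator I t) \<in> borel_measurable lebesgue"
  using borel_measurable_restrict_space_iff[of I lebesgue f] by (simp add: mult.commute)

lemma Kmeas_enn:
  assumes n: "n \<in> {1..N}" and f: "(f :: real \<Rightarrow> ennreal) \<in> borel_measurable M"
  shows "(\<lambda>y. indicator (Iset x n) y * f (Linv a c n y)) \<in> borel_measurable M"
proof -
  let ?F = "\<lambda>t. f t * indicator I t"
  have F: "?F \<in> borel_measurable lebesgue" using ext_meas_enn[OF f] .
  have "(?F \<circ> (\<lambda>y. - c n / a n + (1 / a n) * y)) \<in> borel_measurable lebesgue"
    by (rule measurable_comp[OF aff_meas F]) (use a_pos[OF n] in simp)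
  moreover have "(\<lambda>y. ?F (Linv a c n y)) = ?F \<circ> (\<lambda>y. - c n / a n + (1 / a n) * y)"
    by (auto simp: Linv_aff[OF n] o_def)
  ultimately have h: "(\<lambda>y. ?F (Linv a c n y)) \<in> borel_measurable lebesgue" by simp
  have "(\<lambda>y. indicator (Iset x n) y * ?F (Linv a c n y)) \<in> borel_measurable lebesgue"
    by (rule borel_measurable_times_ennreal[OF borel_measurable_indicator[OF Iset_sets] h])
  then have "(\<lambda>y. indicator (Iset x n) y * ?F (Linv a c n y)) \<in> borel_measurable M"
    by (rule measurable_restrict_space1)
  moreover have "indicator (Iset x n) y * ?F (Linv a c n y) = indicator (Iset x n) y * f (Linv a c n y)" for y
    using Linv_in[OF n, of y] by (auto simp: indicator_def)
  ultimately show ?thesis by simp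
qed

lemma Kmeas_real:
  assumes n: "n \<in> {1..N}" and f: "(f :: real \<Rightarrow> real) \<in> borel_measurable M"
  shows "(\<lambda>y. indicator (Iset x n) y * f (Linv a c n y)) \<in> borel_measurable M"
proof -
  let ?F = "\<lambda>t. f t * indicator I t"
  have F: "?F \<in> borel_measurable lebesgue" using ext_meas_real[OF f] .
  have "(?F \<circ> (\<lambda>y. - c n / a n + (1 / a n) * y)) \<in> borel_measurable lebesgue"
    by (rule measurable_comp[OF aff_meas F]) (use a_pos[OF n] in simp)
  moreover have "(\<lambda>y. ?F (Linv a c n y)) = ?F \<circ> (\<lambda>y. - c n / a n + (1 / a n) * y)"
    by (auto simp: Linv_aff[OF n] o_def)
  ultimately have h: "(\<lambda>y. ?F (Linv a c n y)) \<in> borel_measurable lebesgue" by simp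
  have "(\<lambda>y. indicator (Iset x n) y * ?F (Linv a c n y)) \<in> borel_measurable lebesgue"
    by (rule borel_measurable_times[OF borel_measurable_indicator[OF Iset_sets] h])
  then have "(\<lambda>y. indicator (Iset x n) y * ?F (Linv a c n y)) \<in> borel_measurable M"
    by (rule measurable_restrict_space1)
  moreover have "indicator (Iset x n) y * ?F (Linv a c n y) = indicator (Iset x n) y * f (Linv a c n y)" for y
    using Linv_in[OF n, of y] by (auto simp: indicator_def)
  ultimately show ?thesis by simp
qed

lemma K:
  assumes n: "n \<in> {1..N}" and f: "(f :: real \<Rightarrow> ennreal) \<in> borel_measurable M"
  shows "(\<integral>\<^sup>+y. indicator (Iset x n) y * f (Linv a c n y) \<partial>M) = ennreal (a n) * (\<integral>\<^sup>+t. f t \<partial>M)"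
proof -
  let ?F = "\<lambda>t. f t * indicator I t"
  have F: "?F \<in> borel_measurable lebesgue" using ext_meas_enn[OF f] .
  have an: "a n > 0" using a_pos[OF n] .
  have "(\<integral>\<^sup>+y. indicator (Iset x n) y * f (Linv a c n y) \<partial>M)
      = (\<integral>\<^sup>+y. indicator (Iset x n) y * f (Linv a c n y) * indicator I y \<partial>lebesgue)"
    by (simp add: nn_integral_restrict_space)
  also have "\<dots> = (\<integral>\<^sup>+y. ?F (- c n / a n + (1 / a n) * y) \<partial>lebesgue)"
  proof (rule nn_integral_cong_AE)
    have "AE y in lborel. y \<noteq> x (n - 1)" by (rule AE_lborel_singleton)
    then have "AE y in lebesgue. y \<noteq> x (n - 1)" by (rule AE_completion)
    then show "AE y in lebesgue. indicator (Iset x n) y * f (Linv a c n y) * indicator I y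
        = ?F (- c n / a n + (1 / a n) * y)"
    proof (rule eventually_mono)
      fix y assume y: "y \<noteq> x (n - 1)"
      show "indicator (Iset x n) y * f (Linv a c n y) * indicator I y = ?F (- c n / a n + (1 / a n) * y)"
      proof (cases "y \<in> Iset x n")
        case True
        then show ?thesis using Linv_in[OF n True] Iset_sub[OF n] Linv_aff[OF n, of y] by auto
      next
        case False
        then have "y \<notin> {x (n - 1)..x n}" using y by (cases "n = 1") (auto simp: Iset_def)
        then have "Linv a c n y \<notin> I" using Linv_in_iff[OF n] by simp
        then show ?thesis using False Linv_aff[OF n, of y] by auto
      qed
    qed
  qed
  also have "\<dots> = ennreal (1 / (1 / a n)) * (\<integral>\<^sup>+y. ?F y \<partial>lebesgue)"
    by (rule nn_aff[OF F]) (use an in simp)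
  also have "\<dots> = ennreal (a n) * (\<integral>\<^sup>+t. f t \<partial>M)"
    by (simp add: nn_integral_restrict_space)
  finally show ?thesis .
qed

end


locale PSa = PS +
  assumes \<alpha>meas: "\<And>n. n \<in> {1..N} \<Longrightarrow> \<alpha> n \<in> borel_measurable (lebesgue_on {x 0..x N})"
    and \<Lambda>lt1: "esssup (lebesgue_on {x 0..x N}) (\<lambda>t. ereal (Max ((\<lambda>n. \<bar>\<alpha> n t\<bar>) ` {1..N}))) < 1"
begin

abbreviation "ES \<equiv> esssup M (\<lambda>t. ereal (Max ((\<lambda>n. \<bar>\<alpha> n t\<bar>) ` {1..N})))"
abbreviation "\<Lambda> \<equiv> real_of_ereal ES"

lemma space_M[simp]: "space M = I" by simp

lemma M_pos: "emeasure M (space M) \<noteq> 0"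
proof -
  have "emeasure M I = emeasure lebesgue I" by (simp add: emeasure_restrict_space)
  also have "\<dots> = emeasure lborel I" by (simp add: emeasure_completion)
  also have "\<dots> = ennreal (x N - x 0)" using I_pos by simp
  finally show ?thesis using I_pos by simp
qed

lemma Max_meas: "(\<lambda>t. ereal (Max ((\<lambda>n. \<bar>\<alpha> n t\<bar>) ` {1..N}))) \<in> borel_measurable M"
proof -
  have "(\<lambda>t. Max ((\<lambda>n. \<bar>\<alpha> n t\<bar>) ` {1..N})) \<in> borel_measurable M"
  proof (rule borel_measurable_Max)
    fix n assume n: "n \<in> {1..N}"
    show "(\<lambda>t. \<bar>\<alpha> n t\<bar>) \<in> borel_measurable M" using \<alpha>meas[OF n] by measurable
  qed simp
  then show ?thesis by simp
qed

lemma Max_ge: "n \<in> {1..N} \<Longrightarrow> \<bar>\<alpha> n t\<bar> \<le> Max ((\<lambda>n. \<bar>\<alpha> n t\<bar>) ` {1..N})"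
  by (rule Max_ge) auto

lemma ES_nonneg: "0 \<le> ES"
proof -
  have "esssup M (\<lambda>t. ereal 0) \<le> ES"
  proof (rule esssup_mono)
    fix t
    have "0 \<le> \<bar>\<alpha> 1 t\<bar>" by simp
    also have "\<dots> \<le> Max ((\<lambda>n. \<bar>\<alpha> n t\<bar>) ` {1..N})" using Max_ge[of 1 t] N2 by auto
    finally show "ereal 0 \<le> ereal (Max ((\<lambda>n. \<bar>\<alpha> n t\<bar>) ` {1..N}))" by simp
  qed simp
  moreover have "esssup M (\<lambda>t. ereal 0) = ereal 0" by (rule esssup_const[OF M_pos])
  ultimately show ?thesis by (simp add: zero_ereal_def)
qed

lemma ES_real: obtains r where "ES = ereal r" "0 \<le> r" "r < 1"
  using ES_nonneg \<Lambda>lt1 by (cases ES) auto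

lemma ES_eq: "ES = ereal \<Lambda>"
  by (rule ES_real) simp

lemma \<Lambda>_nonneg: "0 \<le> \<Lambda>" by (rule ES_real) simp

lemma \<Lambda>_lt1: "\<Lambda> < 1" by (rule ES_real) simp

lemma \<alpha>_bound: "AE t in M. \<forall>n\<in>{1..N}. \<bar>\<alpha> n t\<bar> \<le> \<Lambda>"
proof -
  have "AE t in M. ereal (Max ((\<lambda>n. \<bar>\<alpha> n t\<bar>) ` {1..N})) \<le> ES" by (rule esssup_AE)
  then show ?thesis
  proof (rule eventually_mono)
    fix t assume h: "ereal (Max ((\<lambda>n. \<bar>\<alpha> n t\<bar>) ` {1..N})) \<le> ES"
    obtain r where r: "ES = ereal r" using ES_real by blast
    have "Max ((\<lambda>n. \<bar>\<alpha> n t\<bar>) ` {1..N}) \<le> r" using h unfolding r by simp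
    moreover have "\<Lambda> = r" unfolding r by simp
    ultimately have "Max ((\<lambda>n. \<bar>\<alpha> n t\<bar>) ` {1..N}) \<le> \<Lambda>" by simp
    then show "\<forall>n\<in>{1..N}. \<bar>\<alpha> n t\<bar> \<le> \<Lambda>" using Max_ge by force
  qed
qed

lemma AE_back:
  assumes P: "\<And>n. n \<in> {1..N} \<Longrightarrow> AE t in M. P n t"
  shows "AE y in M. \<forall>n\<in>{1..N}. y \<in> Iset x n \<longrightarrow> P n (Linv a c n y)"
proof (rule AE_finite_allI, simp)
  fix n assume n: "n \<in> {1..N}"
  obtain Z where Z: "\<And>t. t \<in> space M - Z \<Longrightarrow> P n t" "Z \<in> null_sets M"
    using AE_E3[OF P[OF n]] by blast
  have Zs: "Z \<in> sets M" using Z(2) by auto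
  have im: "indicator Z \<in> borel_measurable M" using Zs by simp
  have "(\<integral>\<^sup>+y. indicator (Iset x n) y * indicator Z (Linv a c n y) \<partial>M) = ennreal (a n) * emeasure M Z"
    using K[OF n im] Zs by simp
  also have "\<dots> = 0" using Z(2) by auto
  finally have "AE y in M. indicator (Iset x n) y * (indicator Z (Linv a c n y) :: ennreal) = 0"
    using nn_integral_0_iff_AE[OF Kmeas_enn[OF n im]] by simp
  then show "AE y in M. y \<in> Iset x n \<longrightarrow> P n (Linv a c n y)"
  proof (rule eventually_mono, intro impI)
    fix y assume h: "indicator (Iset x n) y * (indicator Z (Linv a c n y) :: ennreal) = 0" "y \<in> Iset x n"
    then have "Linv a c n y \<notin> Z" by (auto simp: indicator_def)
    then show "P n (Linv a c n y)" using Z(1) Linv_in[OF n h(2)] by auto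
  qed
qed

lemma AE_fwd:
  assumes n: "n \<in> {1..N}" and Q: "AE y in M. Q y"
  shows "AE t in M. Q (a n * t + c n)"
proof -
  obtain Z where Z: "\<And>y. y \<in> space M - Z \<Longrightarrow> Q y" "Z \<in> null_sets M"
    using AE_E3[OF Q] by blast
  have ZsM: "Z \<in> sets M" using Z(2) by auto
  then have Zs: "Z \<in> sets lebesgue" "Z \<subseteq> I" using sets_restrict_space_iff[of I lebesgue Z] by auto
  have "emeasure lebesgue Z = emeasure M Z" using Zs by (simp add: emeasure_restrict_space)
  also have "\<dots> = 0" using Z(2) by auto
  finally have Z0: "emeasure lebesgue Z = 0" .
  have an: "a n > 0" using a_pos[OF n] .
  have im: "indicator Z \<in> borel_measurable lebesgue" using Zs by simp
  have m2: "(\<lambda>t. indicator Z (c n + a n * t) :: ennreal) \<in> borel_measurable lebesgue"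
    using measurable_comp[OF aff_meas[of "a n" "c n"] im] an by (simp add: o_def)
  have "(\<integral>\<^sup>+t. indicator Z (c n + a n * t) \<partial>lebesgue) = ennreal (1 / a n) * (\<integral>\<^sup>+t. indicator Z t \<partial>lebesgue)"
    by (rule nn_aff[OF im an])
  also have "\<dots> = 0" using Z0 Zs by simp
  finally have "AE t in lebesgue. (indicator Z (c n + a n * t) :: ennreal) = 0"
    using nn_integral_0_iff_AE[OF m2] by simp
  then have "AE t in lebesgue. t \<in> I \<longrightarrow> Q (a n * t + c n)"
  proof (rule eventually_mono, intro impI)
    fix t assume h: "(indicator Z (c n + a n * t) :: ennreal) = 0" "t \<in> I"
    then have "a n * t + c n \<notin> Z" by (auto simp: indicator_def add.commute)
    moreover have "a n * t + c n \<in> I"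
    proof -
      have "a n * x 0 + c n \<le> a n * t + c n" "a n * t + c n \<le> a n * x N + c n"
        using h(2) an by (auto intro: mult_left_mono)
      moreover have "x 0 \<le> x (n - 1)" "x n \<le> x N" using n x_le[of 0 "n - 1"] x_le[of n N] by auto
      ultimately show ?thesis using L0[OF n] LN[OF n] by auto
    qed
    ultimately show "Q (a n * t + c n)" using Z(1) by auto
  qed
  then show ?thesis by (subst AE_restrict_space_iff) auto
qed

lemma A_meas:
  assumes g: "g \<in> borel_measurable M"
  shows "A g \<in> borel_measurable M"
proof -
  have "(\<lambda>y. \<Sum>n\<in>{1..N}. indicator (Iset x n) y * (\<alpha> n (Linv a c n y) * g (Linv a c n y))) \<in> borel_measurable M"
  proof (rule borel_measurable_sum)
    fix n assume n: "n \<in> {1..N}"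
    have "(\<lambda>t. \<alpha> n t * g t) \<in> borel_measurable M" using \<alpha>meas[OF n] g by simp
    from Kmeas_real[OF n this]
    show "(\<lambda>y. indicator (Iset x n) y * (\<alpha> n (Linv a c n y) * g (Linv a c n y))) \<in> borel_measurable M" .
  qed
  then show ?thesis by (simp add: Aop_def[abs_def])
qed

lemma A_int:
  assumes g: "g \<in> borel_measurable M" and q: "q > 0"
  shows "(\<integral>\<^sup>+y. ennreal (\<bar>A g y\<bar> powr q) \<partial>M)
     = (\<Sum>n\<in>{1..N}. ennreal (a n) * (\<integral>\<^sup>+t. ennreal (\<bar>\<alpha> n t\<bar> powr q * \<bar>g t\<bar> powr q) \<partial>M))"
proof -
  have "(\<integral>\<^sup>+y. ennreal (\<bar>A g y\<bar> powr q) \<partial>M)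
     = (\<integral>\<^sup>+y. (\<Sum>n\<in>{1..N}. indicator (Iset x n) y *
            ennreal (\<bar>\<alpha> n (Linv a c n y)\<bar> powr q * \<bar>g (Linv a c n y)\<bar> powr q)) \<partial>M)"
  proof (rule nn_integral_cong)
    fix y assume "y \<in> space M"
    then have "y \<in> I" by simp
    then obtain m where m: "m \<in> {1..N}" "y \<in> Iset x m" using Iset_cover by blast
    show "ennreal (\<bar>A g y\<bar> powr q) = (\<Sum>n\<in>{1..N}. indicator (Iset x n) y *
            ennreal (\<bar>\<alpha> n (Linv a c n y)\<bar> powr q * \<bar>g (Linv a c n y)\<bar> powr q))"
      by (subst sum_ind[OF m]) (simp add: A_at[OF m] abs_mult powr_mult)
  qed
  also have "\<dots> = (\<Sum>n\<in>{1..N}. (\<integral>\<^sup>+y. indicator (Iset x n) y *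
            ennreal (\<bar>\<alpha> n (Linv a c n y)\<bar> powr q * \<bar>g (Linv a c n y)\<bar> powr q) \<partial>M))"
  proof (rule nn_integral_sum)
    fix n assume n: "n \<in> {1..N}"
    have "(\<lambda>t. ennreal (\<bar>\<alpha> n t\<bar> powr q * \<bar>g t\<bar> powr q)) \<in> borel_measurable M"
      using \<alpha>meas[OF n] g by measurable
    from Kmeas_enn[OF n this]
    show "(\<lambda>y. indicator (Iset x n) y *
            ennreal (\<bar>\<alpha> n (Linv a c n y)\<bar> powr q * \<bar>g (Linv a c n y)\<bar> powr q)) \<in> borel_measurable M" .
  qed
  also have "\<dots> = (\<Sum>n\<in>{1..N}. ennreal (a n) * (\<integral>\<^sup>+t. ennreal (\<bar>\<alpha> n t\<bar> powr q * \<bar>g t\<bar> powr q) \<partial>M))"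
  proof (rule sum.cong, simp)
    fix n assume n: "n \<in> {1..N}"
    have "(\<lambda>t. ennreal (\<bar>\<alpha> n t\<bar> powr q * \<bar>g t\<bar> powr q)) \<in> borel_measurable M"
      using \<alpha>meas[OF n] g by measurable
    from K[OF n this]
    show "(\<integral>\<^sup>+y. indicator (Iset x n) y *
            ennreal (\<bar>\<alpha> n (Linv a c n y)\<bar> powr q * \<bar>g (Linv a c n y)\<bar> powr q) \<partial>M)
        = ennreal (a n) * (\<integral>\<^sup>+t. ennreal (\<bar>\<alpha> n t\<bar> powr q * \<bar>g t\<bar> powr q) \<partial>M)" .
  qed
  finally show ?thesis .
qed

lemma sum_a_enn: "(\<Sum>n\<in>{1..N}. ennreal (a n)) = 1"
  using sum_a a_pos by (subst sum_ennreal) (auto intro: less_imp_le)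

lemma A_le:
  assumes g: "g \<in> borel_measurable M" and q: "q > 0"
  shows "(\<integral>\<^sup>+y. ennreal (\<bar>A g y\<bar> powr q) \<partial>M) \<le> ennreal (\<Lambda> powr q) * (\<integral>\<^sup>+t. ennreal (\<bar>g t\<bar> powr q) \<partial>M)"
proof -
  have "(\<integral>\<^sup>+y. ennreal (\<bar>A g y\<bar> powr q) \<partial>M)
     \<le> (\<Sum>n\<in>{1..N}. ennreal (a n) * (\<integral>\<^sup>+t. ennreal (\<Lambda> powr q) * ennreal (\<bar>g t\<bar> powr q) \<partial>M))"
    unfolding A_int[OF g q]
  proof (rule sum_mono, rule mult_left_mono)
    fix n assume n: "n \<in> {1..N}"
    show "(\<integral>\<^sup>+t. ennreal (\<bar>\<alpha> n t\<bar> powr q * \<bar>g t\<bar> powr q) \<partial>M)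
         \<le> (\<integral>\<^sup>+t. ennreal (\<Lambda> powr q) * ennreal (\<bar>g t\<bar> powr q) \<partial>M)"
    proof (rule nn_integral_mono_AE)
      show "AE t in M. ennreal (\<bar>\<alpha> n t\<bar> powr q * \<bar>g t\<bar> powr q) \<le> ennreal (\<Lambda> powr q) * ennreal (\<bar>g t\<bar> powr q)"
        using \<alpha>_bound
      proof (rule eventually_mono)
        fix t assume "\<forall>n\<in>{1..N}. \<bar>\<alpha> n t\<bar> \<le> \<Lambda>"
        then have "\<bar>\<alpha> n t\<bar> powr q \<le> \<Lambda> powr q" using n q by (auto intro: powr_mono2)
        then have "\<bar>\<alpha> n t\<bar> powr q * \<bar>g t\<bar> powr q \<le> \<Lambda> powr q * \<bar>g t\<bar> powr q"
          by (rule mult_right_mono) simp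
        then show "ennreal (\<bar>\<alpha> n t\<bar> powr q * \<bar>g t\<bar> powr q) \<le> ennreal (\<Lambda> powr q) * ennreal (\<bar>g t\<bar> powr q)"
          by (simp add: ennreal_mult[symmetric] ennreal_leI)
      qed
    qed
  qed simp
  also have "\<dots> = (\<Sum>n\<in>{1..N}. ennreal (a n)) * (ennreal (\<Lambda> powr q) * (\<integral>\<^sup>+t. ennreal (\<bar>g t\<bar> powr q) \<partial>M))"
    using g by (simp add: nn_integral_cmult sum_distrib_right)
  finally show ?thesis using sum_a_enn by simp
qed

lemma A_eq:
  assumes g: "g \<in> borel_measurable M" and q: "q > 0"
    and ex: "\<forall>n\<in>{1..N}. \<forall>t\<in>I. \<bar>\<alpha> n t\<bar> = \<Lambda>"
  shows "(\<integral>\<^sup>+y. ennreal (\<bar>A g y\<bar> powr q) \<partial>M) = ennreal (\<Lambda> powr q) * (\<integral>\<^sup>+t. ennreal (\<bar>g t\<bar> powr q) \<partial>M)"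
proof -
  have "(\<integral>\<^sup>+y. ennreal (\<bar>A g y\<bar> powr q) \<partial>M)
     = (\<Sum>n\<in>{1..N}. ennreal (a n) * (\<integral>\<^sup>+t. ennreal (\<Lambda> powr q) * ennreal (\<bar>g t\<bar> powr q) \<partial>M))"
    unfolding A_int[OF g q]
  proof (rule sum.cong, simp)
    fix n assume n: "n \<in> {1..N}"
    have "(\<integral>\<^sup>+t. ennreal (\<bar>\<alpha> n t\<bar> powr q * \<bar>g t\<bar> powr q) \<partial>M)
         = (\<integral>\<^sup>+t. ennreal (\<Lambda> powr q) * ennreal (\<bar>g t\<bar> powr q) \<partial>M)"
      by (rule nn_integral_cong) (use ex n in \<open>simp add: ennreal_mult[symmetric]\<close>)
    then show "ennreal (a n) * (\<integral>\<^sup>+t. ennreal (\<bar>\<alpha> n t\<bar> powr q * \<bar>g t\<bar> powr q) \<partial>M)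
      = ennreal (a n) * (\<integral>\<^sup>+t. ennreal (\<Lambda> powr q) * ennreal (\<bar>g t\<bar> powr q) \<partial>M)" by simp
  qed
  also have "\<dots> = (\<Sum>n\<in>{1..N}. ennreal (a n)) * (ennreal (\<Lambda> powr q) * (\<integral>\<^sup>+t. ennreal (\<bar>g t\<bar> powr q) \<partial>M))"
    using g by (simp add: nn_integral_cmult sum_distrib_right)
  finally show ?thesis using sum_a_enn by simp
qed

end


lemma convex_ineq:
  fixes s t q \<mu> :: real
  assumes q: "1 \<le> q" and mu: "0 < \<mu>" "\<mu> < 1" and st: "0 \<le> s" "0 \<le> t"
  shows "(s + t) powr q \<le> \<mu> powr (1 - q) * s powr q + (1 - \<mu>) powr (1 - q) * t powr q"
proof -
  have g1: "1 \<le> z powr (1 - q)" if "0 < z" "z \<le> 1" for z :: real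
  proof -
    have "z powr (1 - q) = 1 / z powr (q - 1)" using that by (simp add: powr_diff powr_minus_divide[symmetric] powr_minus)
    moreover have "z powr (q - 1) \<le> 1" using that q by (intro powr_le1) auto
    moreover have "0 < z powr (q - 1)" using that by simp
    ultimately show ?thesis by simp
  qed
  consider "s = 0" | "t = 0" | "0 < s" "0 < t" using st by linarith
  then show ?thesis
  proof cases
    case 1
    have "1 \<le> (1 - \<mu>) powr (1 - q)" using g1[of "1 - \<mu>"] mu by auto
    then have "1 * t powr q \<le> (1 - \<mu>) powr (1 - q) * t powr q"
      by (rule mult_right_mono) simp
    then have "t powr q \<le> (1 - \<mu>) powr (1 - q) * t powr q" by simp
    then show ?thesis using 1 by simp
  next
    case 2
    have "1 \<le> \<mu> powr (1 - q)" using g1[of "\<mu>"] mu by auto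
    then have "1 * s powr q \<le> \<mu> powr (1 - q) * s powr q"
      by (rule mult_right_mono) simp
    then have "s powr q \<le> \<mu> powr (1 - q) * s powr q" by simp
    then show ?thesis using 2 by simp
  next
    case 3
    have cv: "convex_on {0<..} (\<lambda>x::real. x powr q)" by (rule powr_convex[OF q])
    have "((1 - (1 - \<mu>)) *\<^sub>R (s / \<mu>) + (1 - \<mu>) *\<^sub>R (t / (1 - \<mu>))) powr q
       \<le> (1 - (1 - \<mu>)) * (s / \<mu>) powr q + (1 - \<mu>) * (t / (1 - \<mu>)) powr q"
      by (rule convex_onD[OF cv]) (use mu 3 in auto)
    moreover have "(1 - (1 - \<mu>)) *\<^sub>R (s / \<mu>) + (1 - \<mu>) *\<^sub>R (t / (1 - \<mu>)) = s + t" using mu by simp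
    moreover have "(1 - (1 - \<mu>)) * (s / \<mu>) powr q = \<mu> powr (1 - q) * s powr q"
      using mu 3 by (simp add: powr_divide powr_diff)
    moreover have "(1 - \<mu>) * (t / (1 - \<mu>)) powr q = (1 - \<mu>) powr (1 - q) * t powr q"
      using mu 3 by (simp add: powr_divide powr_diff)
    ultimately show ?thesis by simp
  qed
qed

lemma subadd_ineq:
  fixes s t q :: real
  assumes q: "0 < q" "q \<le> 1" and st: "0 \<le> s" "0 \<le> t"
  shows "(s + t) powr q \<le> s powr q + t powr q"
proof (cases "s + t = 0")
  case True then show ?thesis using st by simp
next
  case False
  let ?w = "s + t"
  have w: "0 < ?w" using False st by simp
  have a: "s / ?w \<le> (s / ?w) powr q" using powr_mono'[of q 1 "s / ?w"] q st w by simp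
  have b: "t / ?w \<le> (t / ?w) powr q" using powr_mono'[of q 1 "t / ?w"] q st w by simp
  have "?w powr q = ?w powr q * (s / ?w + t / ?w)" using w by (simp add: add_divide_distrib[symmetric])
  also have "\<dots> \<le> ?w powr q * ((s / ?w) powr q + (t / ?w) powr q)"
    using a b by (intro mult_left_mono) auto
  also have "\<dots> = s powr q + t powr q" using w st by (simp add: powr_divide distrib_left)
  finally show ?thesis .
qed

lemma two_ineq:
  fixes u v q :: real
  assumes q: "0 < q"
  shows "\<bar>u - v\<bar> powr q \<le> 2 powr q * (\<bar>u\<bar> powr q + \<bar>v\<bar> powr q)"
proof -
  have "\<bar>u - v\<bar> \<le> 2 * max \<bar>u\<bar> \<bar>v\<bar>" by simp
  then have "\<bar>u - v\<bar> powr q \<le> (2 * max \<bar>u\<bar> \<bar>v\<bar>) powr q" using q by (intro powr_mono2) auto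
  also have "\<dots> = 2 powr q * max \<bar>u\<bar> \<bar>v\<bar> powr q" by (simp add: powr_mult)
  also have "max \<bar>u\<bar> \<bar>v\<bar> powr q \<le> \<bar>u\<bar> powr q + \<bar>v\<bar> powr q" by (simp add: max_def)
  finally show ?thesis by simp
qed



lemma powr_lemma: fixes L R q :: real shows "0 \<le> L \<Longrightarrow> 0 \<le> R \<Longrightarrow> 0 < q \<Longrightarrow> (L powr q * R) powr (1 / q) = L * R powr (1 / q)"
proof -
  assume h: "0 \<le> L" "0 \<le> R" "0 < q"
  have "(L powr q * R) powr (1 / q) = (L powr q) powr (1 / q) * R powr (1 / q)"
    by (rule powr_mult)
  also have "(L powr q) powr (1 / q) = L powr (q * (1 / q))" by (rule powr_powr)
  also have "L powr (q * (1 / q)) = L" using h by (simp add: powr_one)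
  finally show ?thesis .
qed

context PSa begin

abbreviation "Xq q f \<equiv> (\<integral>\<^sup>+t. ennreal (\<bar>f t\<bar> powr q) \<partial>M)"

lemma Lp_meas: "g \<in> Lp_space p M \<Longrightarrow> g \<in> borel_measurable M"
  by (simp add: Lp_space_def)

lemma Xq_meas: "g \<in> borel_measurable M \<Longrightarrow> (\<lambda>t. ennreal (\<bar>g t\<bar> powr q)) \<in> borel_measurable M"
  by measurable

lemma Lp_fin: assumes "g \<in> Lp_space (ereal q) M" shows "Xq q g < \<infinity>"
proof -
  have "integrable M (\<lambda>t. \<bar>g t\<bar> powr q)" using assms by (simp add: Lp_space_def)
  then show ?thesis by (simp add: integrable_iff_bounded)
qed

lemma Lp_size_fin: "f \<in> borel_measurable M \<Longrightarrow>
  Lp_size (ereal q) M f = (if 1 \<le> q then enn2real (Xq q f) powr (1 / q) else enn2real (Xq q f))"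
  unfolding Lp_size_def by (simp add: integral_eq_nn_integral)

lemma h_fin:
  assumes q: "q > 0" and g: "g \<in> Lp_space (ereal q) M" and b: "b \<in> Lp_space (ereal q) M"
  shows "Xq q (\<lambda>t. g t - b t) < \<infinity>"
proof -
  have gm: "g \<in> borel_measurable M" and bm: "b \<in> borel_measurable M" using g b Lp_meas by auto
  have "Xq q (\<lambda>t. g t - b t) \<le> (\<integral>\<^sup>+t. ennreal (2 powr q) * (ennreal (\<bar>g t\<bar> powr q) + ennreal (\<bar>b t\<bar> powr q)) \<partial>M)"
  proof (rule nn_integral_mono)
    fix t
    have "\<bar>g t - b t\<bar> powr q \<le> 2 powr q * (\<bar>g t\<bar> powr q + \<bar>b t\<bar> powr q)" by (rule two_ineq[OF q])
    then show "ennreal (\<bar>g t - b t\<bar> powr q) \<le> ennreal (2 powr q) * (ennreal (\<bar>g t\<bar> powr q) + ennreal (\<bar>b t\<bar> powr q))"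
      by (simp add: ennreal_mult[symmetric] ennreal_plus[symmetric] ennreal_leI del: ennreal_plus)
  qed
  also have "\<dots> = ennreal (2 powr q) * (Xq q g + Xq q b)"
    using gm bm by (simp add: nn_integral_cmult nn_integral_add)
  also have "\<dots> < \<infinity>" using Lp_fin[OF g] Lp_fin[OF b] by (simp add: ennreal_mult_less_top)
  finally show ?thesis .
qed

lemma fix_AE: "is_fixpt N x a c \<alpha> p M (\<lambda>_. 0) b g \<Longrightarrow> AE y in M. g y = A (\<lambda>t. g t - b t) y"
  unfolding is_fixpt_def Top_Aop by (auto elim: eventually_mono)

lemma fix_Y_le:
  assumes q: "q > 0" and gm: "g \<in> borel_measurable M" and bm: "b \<in> borel_measurable M"
    and fx: "AE y in M. g y = A (\<lambda>t. g t - b t) y"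
  shows "Xq q g \<le> ennreal (\<Lambda> powr q) * Xq q (\<lambda>t. g t - b t)"
proof -
  have "Xq q g = Xq q (A (\<lambda>t. g t - b t))"
    by (rule nn_integral_cong_AE) (use fx in \<open>auto elim: eventually_mono\<close>)
  also have "\<dots> \<le> ennreal (\<Lambda> powr q) * Xq q (\<lambda>t. g t - b t)"
    by (rule A_le) (use gm bm q in auto)
  finally show ?thesis .
qed

lemma fix_Y_eq:
  assumes q: "q > 0" and gm: "g \<in> borel_measurable M" and bm: "b \<in> borel_measurable M"
    and fx: "AE y in M. g y = A (\<lambda>t. g t - b t) y"
    and ex: "\<forall>n\<in>{1..N}. \<forall>t\<in>I. \<bar>\<alpha> n t\<bar> = \<Lambda>"
  shows "Xq q g = ennreal (\<Lambda> powr q) * Xq q (\<lambda>t. g t - b t)"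
proof -
  have "Xq q g = Xq q (A (\<lambda>t. g t - b t))"
    by (rule nn_integral_cong_AE) (use fx in \<open>auto elim: eventually_mono\<close>)
  also have "\<dots> = ennreal (\<Lambda> powr q) * Xq q (\<lambda>t. g t - b t)"
    by (rule A_eq) (use gm bm q ex in auto)
  finally show ?thesis .
qed

lemma fix_S_le:
  assumes q: "q > 0" and g: "g \<in> Lp_space (ereal q) M" and b: "b \<in> Lp_space (ereal q) M"
    and fx: "AE y in M. g y = A (\<lambda>t. g t - b t) y"
  shows "enn2real (Xq q g) \<le> \<Lambda> powr q * enn2real (Xq q (\<lambda>t. g t - b t))"
proof -
  have gm: "g \<in> borel_measurable M" and bm: "b \<in> borel_measurable M" using g b Lp_meas by auto
  have "enn2real (Xq q g) \<le> enn2real (ennreal (\<Lambda> powr q) * Xq q (\<lambda>t. g t - b t))"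
    by (rule enn2real_mono[OF fix_Y_le[OF q gm bm fx]])
       (use h_fin[OF q g b] in \<open>simp add: ennreal_mult_less_top\<close>)
  then show ?thesis by (simp add: enn2real_mult)
qed

lemma part2_fin:
  assumes q: "q > 0" and b: "b \<in> Lp_space (ereal q) M"
    and fx: "is_fixpt N x a c \<alpha> (ereal q) M (\<lambda>_. 0) b g"
  shows "Lp_size (ereal q) M g \<le> (if 1 \<le> ereal q then \<Lambda> else \<Lambda> powr real_of_ereal (ereal q))
            * Lp_size (ereal q) M (\<lambda>t. g t - b t)"
proof -
  have g: "g \<in> Lp_space (ereal q) M" using fx by (simp add: is_fixpt_def)
  have gm: "g \<in> borel_measurable M" and bm: "b \<in> borel_measurable M" using g b Lp_meas by auto
  have hm: "(\<lambda>t. g t - b t) \<in> borel_measurable M" using gm bm by simp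
  have S: "enn2real (Xq q g) \<le> \<Lambda> powr q * enn2real (Xq q (\<lambda>t. g t - b t))"
    by (rule fix_S_le[OF q g b fix_AE[OF fx]])
  show ?thesis
  proof (cases "1 \<le> q")
    case True
    have "enn2real (Xq q g) powr (1 / q) \<le> (\<Lambda> powr q * enn2real (Xq q (\<lambda>t. g t - b t))) powr (1 / q)"
      by (rule powr_mono2) (use S q in auto)
    also have "\<dots> = \<Lambda> * enn2real (Xq q (\<lambda>t. g t - b t)) powr (1 / q)"
      by (rule powr_lemma) (use \<Lambda>_nonneg q in auto)
    finally show ?thesis using True Lp_size_fin[OF gm, of q] Lp_size_fin[OF hm, of q] by simp
  next
    case False
    then show ?thesis using S Lp_size_fin[OF gm, of q] Lp_size_fin[OF hm, of q] by simp
  qed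
qed

lemma part1_fin:
  assumes q: "q > 0" and b: "b \<in> Lp_space (ereal q) M"
    and fx: "is_fixpt N x a c \<alpha> (ereal q) M (\<lambda>_. 0) b g"
    and ex: "\<forall>n\<in>{1..N}. \<forall>t\<in>I. \<bar>\<alpha> n t\<bar> = \<Lambda>"
  shows "Lp_size (ereal q) M g = (if 1 \<le> ereal q then \<Lambda> else \<Lambda> powr real_of_ereal (ereal q))
            * Lp_size (ereal q) M (\<lambda>t. g t - b t)"
proof -
  have g: "g \<in> Lp_space (ereal q) M" using fx by (simp add: is_fixpt_def)
  have gm: "g \<in> borel_measurable M" and bm: "b \<in> borel_measurable M" using g b Lp_meas by auto
  have hm: "(\<lambda>t. g t - b t) \<in> borel_measurable M" using gm bm by simp
  have S: "enn2real (Xq q g) = \<Lambda> powr q * enn2real (Xq q (\<lambda>t. g t - b t))"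
    using fix_Y_eq[OF q gm bm fix_AE[OF fx] ex] by (simp add: enn2real_mult)
  show ?thesis
  proof (cases "1 \<le> q")
    case True
    have "enn2real (Xq q g) powr (1 / q) = \<Lambda> * enn2real (Xq q (\<lambda>t. g t - b t)) powr (1 / q)"
      unfolding S by (rule powr_lemma) (use \<Lambda>_nonneg q in auto)
    then show ?thesis using True Lp_size_fin[OF gm, of q] Lp_size_fin[OF hm, of q] by simp
  next
    case False
    then show ?thesis using S Lp_size_fin[OF gm, of q] Lp_size_fin[OF hm, of q] by simp
  qed
qed

end


lemma arithC: fixes L r G B :: real
  shows "r \<le> G + B \<Longrightarrow> G \<le> L * r \<Longrightarrow> B \<le> 1 \<Longrightarrow> L < 1 \<Longrightarrow> r \<le> 1 / (1 - L)"
proof -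
  assume h: "r \<le> G + B" "G \<le> L * r" "B \<le> 1" "L < 1"
  then have "r - L * r \<le> 1" by linarith
  then have "r * (1 - L) \<le> 1" by (simp add: algebra_simps)
  then show ?thesis using h(4) by (simp add: pos_le_divide_eq)
qed

lemma arith_div1: fixes L h G :: real shows "0 < L \<Longrightarrow> L * h \<le> G \<Longrightarrow> h \<le> G / L"
  by (simp add: pos_le_divide_eq mult.commute)

lemma arith_div2: fixes L h G :: real shows "0 < L \<Longrightarrow> h \<le> G / L \<Longrightarrow> L * h \<le> G"
  by (simp add: pos_le_divide_eq mult.commute)

context PSa begin

abbreviation "EE f \<equiv> esssup M (\<lambda>t. ereal \<bar>f t\<bar>)"

lemma EE_nonneg: "f \<in> borel_measurable M \<Longrightarrow> 0 \<le> EE f"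
proof -
  assume f: "f \<in> borel_measurable M"
  have "esssup M (\<lambda>t. ereal 0) \<le> EE f"
    by (rule esssup_mono) simp_all
  moreover have "esssup M (\<lambda>t. ereal 0) = ereal 0" by (rule esssup_const[OF M_pos])
  ultimately show ?thesis by (simp add: zero_ereal_def)
qed

lemma Linf_fin: "g \<in> Lp_space \<infinity> M \<Longrightarrow> EE g < \<infinity>"
  by (simp add: Lp_space_def)

lemma Linf_real: assumes "g \<in> Lp_space \<infinity> M" obtains r where "EE g = ereal r" "0 \<le> r"
proof -
  have "0 \<le> EE g" using assms Lp_meas EE_nonneg by blast
  moreover have "EE g < \<infinity>" using Linf_fin[OF assms] .
  ultimately show ?thesis using that by (cases "EE g") auto
qed

lemma Linf_size: "Lp_size \<infinity> M f = real_of_ereal (EE f)"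
  by (simp add: Lp_size_def)

lemma Linf_h:
  assumes g: "g \<in> Lp_space \<infinity> M" and b: "b \<in> Lp_space \<infinity> M"
  shows "EE (\<lambda>t. g t - b t) \<le> EE g + EE b" "EE (\<lambda>t. g t - b t) < \<infinity>"
proof -
  have gm: "g \<in> borel_measurable M" and bm: "b \<in> borel_measurable M" using g b Lp_meas by auto
  have "EE (\<lambda>t. g t - b t) \<le> esssup M (\<lambda>t. ereal \<bar>g t\<bar> + ereal \<bar>b t\<bar>)"
    by (rule esssup_mono) (use gm bm in auto)
  also have "\<dots> \<le> EE g + EE b" by (rule esssup_add)
  finally show "EE (\<lambda>t. g t - b t) \<le> EE g + EE b" .
  moreover obtain G where "EE g = ereal G" using Linf_real[OF g] by blast
  moreover obtain B where "EE b = ereal B" using Linf_real[OF b] by blast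
  ultimately have "EE (\<lambda>t. g t - b t) \<le> ereal (G + B)" by simp
  then show "EE (\<lambda>t. g t - b t) < \<infinity>" by (rule le_less_trans) simp
qed

lemma AE_EE: "AE t in M. ereal \<bar>f t\<bar> \<le> EE f" by (rule esssup_AE)

lemma part2_inf:
  assumes b: "b \<in> Lp_space \<infinity> M" and fx: "is_fixpt N x a c \<alpha> \<infinity> M (\<lambda>_. 0) b g"
  shows "Lp_size \<infinity> M g \<le> \<Lambda> * Lp_size \<infinity> M (\<lambda>t. g t - b t)"
proof -
  have g: "g \<in> Lp_space \<infinity> M" using fx by (simp add: is_fixpt_def)
  have gm: "g \<in> borel_measurable M" and bm: "b \<in> borel_measurable M" using g b Lp_meas by auto
  have hm: "(\<lambda>t. g t - b t) \<in> borel_measurable M" using gm bm by simp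
  obtain r where r: "EE (\<lambda>t. g t - b t) = ereal r" "0 \<le> r"
    using Linf_h[OF g b] EE_nonneg[OF hm] by (cases "EE (\<lambda>t. g t - b t)") auto
  have hb: "AE t in M. \<bar>g t - b t\<bar> \<le> r" using AE_EE[of "\<lambda>t. g t - b t"] unfolding r by simp
  have "AE y in M. \<forall>n\<in>{1..N}. y \<in> Iset x n \<longrightarrow>
      (\<bar>g (Linv a c n y) - b (Linv a c n y)\<bar> \<le> r \<and> \<bar>\<alpha> n (Linv a c n y)\<bar> \<le> \<Lambda>)"
    by (rule AE_back) (use hb \<alpha>_bound in \<open>auto elim: eventually_mono\<close>)
  then have "AE y in M. \<bar>g y\<bar> \<le> \<Lambda> * r"
    using fix_AE[OF fx] AE_space
  proof (eventually_elim)
    case (elim y)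
    then have "y \<in> I" by simp
    then obtain m where m: "m \<in> {1..N}" "y \<in> Iset x m" using Iset_cover by blast
    have "\<bar>g y\<bar> = \<bar>\<alpha> m (Linv a c m y)\<bar> * \<bar>g (Linv a c m y) - b (Linv a c m y)\<bar>"
      using elim(2) A_at[OF m] by (simp add: abs_mult)
    also have "\<dots> \<le> \<Lambda> * r" using elim(1) m by (intro mult_mono) auto
    finally show ?case .
  qed
  then have "EE g \<le> ereal (\<Lambda> * r)" by (intro esssup_I) (use gm in auto)
  moreover have "0 \<le> EE g" using EE_nonneg[OF gm] .
  ultimately have "real_of_ereal (EE g) \<le> \<Lambda> * r"
    by (cases "EE g") auto
  then show ?thesis using r by (simp add: Linf_size)
qed

lemma part1_inf:
  assumes b: "b \<in> Lp_space \<infinity> M" and fx: "is_fixpt N x a c \<alpha> \<infinity> M (\<lambda>_. 0) b g"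
    and ex: "\<forall>n\<in>{1..N}. \<forall>t\<in>I. \<bar>\<alpha> n t\<bar> = \<Lambda>"
  shows "Lp_size \<infinity> M g = \<Lambda> * Lp_size \<infinity> M (\<lambda>t. g t - b t)"
proof -
  have g: "g \<in> Lp_space \<infinity> M" using fx by (simp add: is_fixpt_def)
  have gm: "g \<in> borel_measurable M" and bm: "b \<in> borel_measurable M" using g b Lp_meas by auto
  have hm: "(\<lambda>t. g t - b t) \<in> borel_measurable M" using gm bm by simp
  obtain r where r: "EE (\<lambda>t. g t - b t) = ereal r" "0 \<le> r"
    using Linf_h[OF g b] EE_nonneg[OF hm] by (cases "EE (\<lambda>t. g t - b t)") auto
  obtain G where G: "EE g = ereal G" "0 \<le> G" using Linf_real[OF g] by blast
  have gb: "AE y in M. \<bar>g y\<bar> \<le> G" using AE_EE[of g] unfolding G by simp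
  have n1: "(1::nat) \<in> {1..N}" using N2 by simp
  have "AE t in M. \<bar>g (a 1 * t + c 1)\<bar> \<le> G \<and> g (a 1 * t + c 1) = A (\<lambda>t. g t - b t) (a 1 * t + c 1)"
    by (rule AE_fwd[OF n1]) (use gb fix_AE[OF fx] in \<open>auto elim: eventually_mono\<close>)
  then have key: "AE t in M. \<Lambda> * \<bar>g t - b t\<bar> \<le> G"
    using AE_space
  proof (eventually_elim)
    case (elim t)
    then have t: "t \<in> I" by simp
    have a1: "a 1 > 0" using a_pos[OF n1] .
    have e0: "a 1 * x 0 + c 1 = x 0" and eN: "a 1 * x N + c 1 = x 1" using L0[OF n1] LN[OF n1] by auto
    have "a 1 * x 0 \<le> a 1 * t" "a 1 * t \<le> a 1 * x N" using t a1 by auto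
    then have inI1: "a 1 * t + c 1 \<in> Iset x 1" using e0 eN by (simp add: Iset_def)
    have li: "Linv a c 1 (a 1 * t + c 1) = t" using a1 by (simp add: Linv_def)
    have "\<bar>g (a 1 * t + c 1)\<bar> = \<bar>\<alpha> 1 t\<bar> * \<bar>g t - b t\<bar>"
      using elim(1) A_at[OF n1 inI1] li by (simp add: abs_mult)
    then show ?case using elim(1) ex n1 t by auto
  qed
  have "\<Lambda> * r \<le> G"
  proof (cases "\<Lambda> = 0")
    case True then show ?thesis using G by simp
  next
    case False
    then have Lp: "\<Lambda> > 0" using \<Lambda>_nonneg by simp
    have "AE t in M. ereal \<bar>g t - b t\<bar> \<le> ereal (G / \<Lambda>)"
      using key by (rule eventually_mono) (use arith_div1[OF Lp] in simp)
    then have "EE (\<lambda>t. g t - b t) \<le> ereal (G / \<Lambda>)" by (intro esssup_I) (use hm in auto)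
    then have "r \<le> G / \<Lambda>" using r by simp
    then show ?thesis using arith_div2[OF Lp] by blast
  qed
  moreover have "G \<le> \<Lambda> * r" using part2_inf[OF b fx] G r by (simp add: Linf_size)
  ultimately show ?thesis using G r by (simp add: Linf_size)
qed

lemma partC_inf:
  assumes b: "b \<in> Lp_space \<infinity> M" and b1: "Lp_size \<infinity> M b \<le> 1"
    and fx: "is_fixpt N x a c \<alpha> \<infinity> M (\<lambda>_. 0) b g"
  shows "Lp_size \<infinity> M (\<lambda>t. g t - b t) \<le> 1 / (1 - \<Lambda>)"
proof -
  have g: "g \<in> Lp_space \<infinity> M" using fx by (simp add: is_fixpt_def)
  have gm: "g \<in> borel_measurable M" and bm: "b \<in> borel_measurable M" using g b Lp_meas by auto
  have hm: "(\<lambda>t. g t - b t) \<in> borel_measurable M" using gm bm by simp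
  obtain r where r: "EE (\<lambda>t. g t - b t) = ereal r" "0 \<le> r"
    using Linf_h[OF g b] EE_nonneg[OF hm] by (cases "EE (\<lambda>t. g t - b t)") auto
  obtain G where G: "EE g = ereal G" "0 \<le> G" using Linf_real[OF g] by blast
  obtain B where B: "EE b = ereal B" "0 \<le> B" using Linf_real[OF b] by blast
  have "r \<le> G + B" using Linf_h(1)[OF g b] r G B by simp
  moreover have "G \<le> \<Lambda> * r" using part2_inf[OF b fx] G r by (simp add: Linf_size)
  moreover have "B \<le> 1" using b1 B by (simp add: Linf_size)
  ultimately have "r \<le> 1 / (1 - \<Lambda>)" using \<Lambda>_lt1 by (rule arithC)
  then show ?thesis using r by (simp add: Linf_size)
qed

end


lemma arithF: fixes R S B c K L \<theta> :: real
  assumes "0 \<le> R" "R \<le> c * S + K * B" "S \<le> L * R" "c * L \<le> \<theta>" "\<theta> < 1" "0 \<le> c" "0 \<le> K" "B \<le> 1"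
  shows "R \<le> K / (1 - \<theta>)"
proof -
  have "c * S \<le> c * (L * R)" using assms by (intro mult_left_mono) auto
  also have "\<dots> = (c * L) * R" by simp
  also have "\<dots> \<le> \<theta> * R" using assms by (intro mult_right_mono) auto
  finally have "R \<le> \<theta> * R + K * B" using assms by linarith
  moreover have "K * B \<le> K" using assms by (simp add: mult_left_le)
  ultimately have "R - \<theta> * R \<le> K" by linarith
  then have "R * (1 - \<theta>) \<le> K" by (simp add: algebra_simps)
  then show ?thesis using assms(5) by (simp add: pos_le_divide_eq)
qed

context PSa begin

definition "\<mu> = (1 + \<Lambda>) / 2"

lemma mu_props: "0 < \<mu>" "\<mu> < 1" "\<Lambda> \<le> \<mu>"
  using \<Lambda>_nonneg \<Lambda>_lt1 by (auto simp: \<mu>_def)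

definition "Cf q = (if 1 \<le> q then (((1 - \<mu>) powr (1 - q)) / (1 - \<mu>)) powr (1 / q) else 1 / (1 - \<Lambda> powr q))"

lemma partC_fin:
  assumes q: "q > 0" and b: "b \<in> Lp_space (ereal q) M" and b1: "Lp_size (ereal q) M b \<le> 1"
    and fx: "is_fixpt N x a c \<alpha> (ereal q) M (\<lambda>_. 0) b g"
  shows "Lp_size (ereal q) M (\<lambda>t. g t - b t) \<le> Cf q"
proof -
  have g: "g \<in> Lp_space (ereal q) M" using fx by (simp add: is_fixpt_def)
  have gm: "g \<in> borel_measurable M" and bm: "b \<in> borel_measurable M" using g b Lp_meas by auto
  have hm: "(\<lambda>t. g t - b t) \<in> borel_measurable M" using gm bm by simp
  have S: "enn2real (Xq q g) \<le> \<Lambda> powr q * enn2real (Xq q (\<lambda>t. g t - b t))"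
    by (rule fix_S_le[OF q g b fix_AE[OF fx]])
  have Xg: "Xq q g < \<infinity>" and Xb: "Xq q b < \<infinity>" using Lp_fin g b by auto
  have R0: "0 \<le> enn2real (Xq q (\<lambda>t. g t - b t))" by simp
  have main: "enn2real (Xq q (\<lambda>t. g t - b t)) \<le> c0 * enn2real (Xq q g) + K * enn2real (Xq q b)"
    if c0: "0 \<le> c0" and K: "0 \<le> K"
      and pw: "\<And>t. \<bar>g t - b t\<bar> powr q \<le> c0 * \<bar>g t\<bar> powr q + K * \<bar>b t\<bar> powr q" for c0 K
  proof -
    have "Xq q (\<lambda>t. g t - b t) \<le> (\<integral>\<^sup>+t. ennreal c0 * ennreal (\<bar>g t\<bar> powr q) + ennreal K * ennreal (\<bar>b t\<bar> powr q) \<partial>M)"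
    proof (rule nn_integral_mono)
      fix t show "ennreal (\<bar>g t - b t\<bar> powr q) \<le> ennreal c0 * ennreal (\<bar>g t\<bar> powr q) + ennreal K * ennreal (\<bar>b t\<bar> powr q)"
        using pw[of t] c0 K by (simp add: ennreal_mult[symmetric] ennreal_plus[symmetric] ennreal_leI del: ennreal_plus)
    qed
    also have "\<dots> = ennreal c0 * Xq q g + ennreal K * Xq q b"
      using gm bm by (simp add: nn_integral_cmult nn_integral_add)
    finally have le: "Xq q (\<lambda>t. g t - b t) \<le> ennreal c0 * Xq q g + ennreal K * Xq q b" .
    have fin: "ennreal c0 * Xq q g + ennreal K * Xq q b < top"
      using Xg Xb by (simp add: ennreal_mult_less_top)
    have "enn2real (Xq q (\<lambda>t. g t - b t)) \<le> enn2real (ennreal c0 * Xq q g + ennreal K * Xq q b)"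
      by (rule enn2real_mono[OF le fin])
    also have "\<dots> = c0 * enn2real (Xq q g) + K * enn2real (Xq q b)"
      using Xg Xb c0 K by (simp add: enn2real_plus ennreal_mult_less_top enn2real_mult)
    finally show ?thesis .
  qed
  show ?thesis
  proof (cases "1 \<le> q")
    case True
    let ?c = "\<mu> powr (1 - q)" and ?K = "(1 - \<mu>) powr (1 - q)"
    have pw: "\<bar>g t - b t\<bar> powr q \<le> ?c * \<bar>g t\<bar> powr q + ?K * \<bar>b t\<bar> powr q" for t
    proof -
      have "\<bar>g t - b t\<bar> powr q \<le> (\<bar>g t\<bar> + \<bar>b t\<bar>) powr q" using q by (intro powr_mono2) auto
      also have "\<dots> \<le> ?c * \<bar>g t\<bar> powr q + ?K * \<bar>b t\<bar> powr q"
        by (rule convex_ineq) (use True mu_props in auto)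
      finally show ?thesis .
    qed
    have R: "enn2real (Xq q (\<lambda>t. g t - b t)) \<le> ?c * enn2real (Xq q g) + ?K * enn2real (Xq q b)"
      by (rule main) (use pw in auto)
    have cl: "?c * \<Lambda> powr q \<le> \<mu>"
    proof -
      have "?c * \<Lambda> powr q \<le> ?c * \<mu> powr q"
        using mu_props \<Lambda>_nonneg q by (intro mult_left_mono powr_mono2) auto
      also have "\<dots> = \<mu> powr ((1 - q) + q)" by (rule powr_add[symmetric])
      finally show ?thesis using mu_props by simp
    qed
    have Bb: "enn2real (Xq q b) \<le> 1"
    proof (rule ccontr)
      assume "\<not> ?thesis"
      then have "1 powr (1 / q) < enn2real (Xq q b) powr (1 / q)" using q by (intro powr_less_mono2) auto
      then show False using b1 True Lp_size_fin[OF bm, of q] by simp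
    qed
    have "enn2real (Xq q (\<lambda>t. g t - b t)) \<le> ?K / (1 - \<mu>)"
      by (rule arithF[OF R0 R S cl]) (use mu_props Bb in auto)
    then have "enn2real (Xq q (\<lambda>t. g t - b t)) powr (1 / q) \<le> (?K / (1 - \<mu>)) powr (1 / q)"
      using q by (intro powr_mono2) auto
    then show ?thesis using True Lp_size_fin[OF hm, of q] by (simp add: Cf_def)
  next
    case False
    have pw: "\<bar>g t - b t\<bar> powr q \<le> 1 * \<bar>g t\<bar> powr q + 1 * \<bar>b t\<bar> powr q" for t
    proof -
      have "\<bar>g t - b t\<bar> powr q \<le> (\<bar>g t\<bar> + \<bar>b t\<bar>) powr q" using q by (intro powr_mono2) auto
      also have "\<dots> \<le> \<bar>g t\<bar> powr q + \<bar>b t\<bar> powr q"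
        by (rule subadd_ineq) (use False q in auto)
      finally show ?thesis by simp
    qed
    have R: "enn2real (Xq q (\<lambda>t. g t - b t)) \<le> 1 * enn2real (Xq q g) + 1 * enn2real (Xq q b)"
      by (rule main) (use pw in auto)
    have Ll: "\<Lambda> powr q < 1"
    proof -
      have "\<Lambda> powr q < 1 powr q" using \<Lambda>_nonneg \<Lambda>_lt1 q by (intro powr_less_mono2) auto
      then show ?thesis by simp
    qed
    have Bb: "enn2real (Xq q b) \<le> 1" using b1 False Lp_size_fin[OF bm, of q] by simp
    have "enn2real (Xq q (\<lambda>t. g t - b t)) \<le> 1 / (1 - \<Lambda> powr q)"
      by (rule arithF[OF R0 R S _ Ll]) (use Bb in auto)
    then show ?thesis using False Lp_size_fin[OF hm, of q] by (simp add: Cf_def)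
  qed
qed

end


lemma geom_lemma:
  fixes f :: "nat \<Rightarrow> real"
  assumes fb: "\<And>k. \<bar>f k\<bar> \<le> K * \<mu> ^ k" and mu: "0 \<le> \<mu>" "\<mu> < 1"
  shows "summable (\<lambda>k. \<bar>f k\<bar>)" "\<bar>\<Sum>k. f (Suc k)\<bar> \<le> K / (1 - \<mu>)"
proof -
  have sg: "summable (\<lambda>k. K * \<mu> ^ k)" using mu by (intro summable_mult summable_geometric) simp
  show sf: "summable (\<lambda>k. \<bar>f k\<bar>)" by (rule summable_comparison_test'[OF sg]) (use fb in simp)
  have sf': "summable f" using sf by (rule summable_rabs_cancel)
  have sfs: "summable (\<lambda>k. \<bar>f (Suc k)\<bar>)" using sf by (subst summable_Suc_iff)
  have "\<bar>\<Sum>k. f (Suc k)\<bar> \<le> (\<Sum>k. \<bar>f (Suc k)\<bar>)" by (rule summable_rabs[OF sfs])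
  also have "\<dots> = (\<Sum>k. \<bar>f k\<bar>) - \<bar>f 0\<bar>" using suminf_split_head[OF sf] by simp
  also have "\<dots> \<le> (\<Sum>k. \<bar>f k\<bar>)" by simp
  also have "\<dots> \<le> (\<Sum>k. K * \<mu> ^ k)" by (rule suminf_le[OF _ sf sg]) (use fb in simp)
  also have "\<dots> = K * (1 / (1 - \<mu>))" using mu by (simp add: suminf_mult summable_geometric suminf_geometric)
  finally show "\<bar>\<Sum>k. f (Suc k)\<bar> \<le> K / (1 - \<mu>)" by simp
qed

lemma pow_powr: fixes z q :: real shows "(z ^ k) powr q = (z powr q) ^ k"
  by (induction k) (simp_all add: powr_mult)

context PSa begin

definition "gfix b = (\<lambda>y. - (\<Sum>k. (A ^^ Suc k) b y))"

lemma vv_meas: "b \<in> borel_measurable M \<Longrightarrow> (A ^^ k) b \<in> borel_measurable M"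
  by (induction k) (simp_all add: A_meas)

lemma gfix_meas: "b \<in> borel_measurable M \<Longrightarrow> gfix b \<in> borel_measurable M"
  unfolding gfix_def
  by (intro borel_measurable_uminus borel_measurable_suminf vv_meas)

lemma gfix_fix:
  assumes bm: "b \<in> borel_measurable M"
    and sm: "AE t in M. summable (\<lambda>k. \<bar>(A ^^ k) b t\<bar>)"
  shows "AE y in M. Top N x a c \<alpha> (\<lambda>_. 0) b (gfix b) y = gfix b y"
proof -
  have "AE y in M. \<forall>n\<in>{1..N}. y \<in> Iset x n \<longrightarrow> summable (\<lambda>k. \<bar>(A ^^ k) b (Linv a c n y)\<bar>)"
    by (rule AE_back) (use sm in auto)
  then show ?thesis using AE_space
  proof (eventually_elim)
    case (elim y)
    then have "y \<in> I" by simp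
    then obtain m where m: "m \<in> {1..N}" "y \<in> Iset x m" using Iset_cover by blast
    define t where "t = Linv a c m y"
    have s: "summable (\<lambda>k. (A ^^ k) b t)" using elim(1) m by (auto simp: t_def intro: summable_rabs_cancel)
    have "Top N x a c \<alpha> (\<lambda>_. 0) b (gfix b) y = \<alpha> m t * (gfix b t - b t)"
      by (simp add: Top_Aop A_at[OF m] t_def)
    also have "gfix b t - b t = - (\<Sum>k. (A ^^ k) b t)"
      using suminf_split_head[OF s] by (simp add: gfix_def)
    also have "\<alpha> m t * - (\<Sum>k. (A ^^ k) b t) = - (\<Sum>k. \<alpha> m t * (A ^^ k) b t)"
      using suminf_mult[OF s, of "\<alpha> m t"] by simp
    also have "(\<lambda>k. \<alpha> m t * (A ^^ k) b t) = (\<lambda>k. (A ^^ Suc k) b y)"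
      by (auto simp: A_at[OF m] t_def)
    finally show ?case by (simp add: gfix_def)
  qed
qed

lemma gfix_inf:
  assumes b: "b \<in> Lp_space \<infinity> M"
  shows "is_fixpt N x a c \<alpha> \<infinity> M (\<lambda>_. 0) b (gfix b)"
proof -
  have bm: "b \<in> borel_measurable M" using b Lp_meas by auto
  obtain B where B: "EE b = ereal B" "0 \<le> B" using Linf_real[OF b] by blast
  have step: "AE t in M. \<bar>(A ^^ k) b t\<bar> \<le> B * \<Lambda> ^ k" for k
  proof (induction k)
    case 0
    show ?case using AE_EE[of b] unfolding B by simp
  next
    case (Suc k)
    have "AE y in M. \<forall>n\<in>{1..N}. y \<in> Iset x n \<longrightarrow>
        (\<bar>(A ^^ k) b (Linv a c n y)\<bar> \<le> B * \<Lambda> ^ k \<and> \<bar>\<alpha> n (Linv a c n y)\<bar> \<le> \<Lambda>)"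
      by (rule AE_back) (use Suc \<alpha>_bound in \<open>auto elim: eventually_mono\<close>)
    then show ?case using AE_space
    proof (eventually_elim)
      case (elim y)
      then have "y \<in> I" by simp
      then obtain m where m: "m \<in> {1..N}" "y \<in> Iset x m" using Iset_cover by blast
      have "\<bar>(A ^^ Suc k) b y\<bar> = \<bar>\<alpha> m (Linv a c m y)\<bar> * \<bar>(A ^^ k) b (Linv a c m y)\<bar>"
        by (simp add: A_at[OF m] abs_mult)
      also have "\<dots> \<le> \<Lambda> * (B * \<Lambda> ^ k)" using elim(1) m \<Lambda>_nonneg by (intro mult_mono) auto
      finally show ?case by (simp add: algebra_simps)
    qed
  qed
  have all: "AE t in M. \<forall>k. \<bar>(A ^^ k) b t\<bar> \<le> B * \<Lambda> ^ k"
    using step by (simp add: AE_all_countable)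
  have sm: "AE t in M. summable (\<lambda>k. \<bar>(A ^^ k) b t\<bar>)"
    using all
  proof (rule eventually_mono)
    fix t assume "\<forall>k. \<bar>(A ^^ k) b t\<bar> \<le> B * \<Lambda> ^ k"
    then show "summable (\<lambda>k. \<bar>(A ^^ k) b t\<bar>)"
      using geom_lemma(1)[of "\<lambda>k. (A ^^ k) b t" B \<Lambda>] \<Lambda>_nonneg \<Lambda>_lt1 by simp
  qed
  have gb: "AE t in M. ereal \<bar>gfix b t\<bar> \<le> ereal (B / (1 - \<Lambda>))"
    using all
  proof (rule eventually_mono)
    fix t assume "\<forall>k. \<bar>(A ^^ k) b t\<bar> \<le> B * \<Lambda> ^ k"
    then have "\<bar>\<Sum>k. (A ^^ Suc k) b t\<bar> \<le> B / (1 - \<Lambda>)"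
      using geom_lemma(2)[of "\<lambda>k. (A ^^ k) b t" B \<Lambda>] \<Lambda>_nonneg \<Lambda>_lt1 by simp
    then show "ereal \<bar>gfix b t\<bar> \<le> ereal (B / (1 - \<Lambda>))" by (simp add: gfix_def)
  qed
  have "EE (gfix b) \<le> ereal (B / (1 - \<Lambda>))"
    by (rule esssup_I) (use gb gfix_meas[OF bm] in auto)
  then have "EE (gfix b) < \<infinity>" by (rule le_less_trans) simp
  then have "gfix b \<in> Lp_space \<infinity> M" using gfix_meas[OF bm] by (simp add: Lp_space_def)
  then show ?thesis using gfix_fix[OF bm sm] by (simp add: is_fixpt_def)
qed

end


lemma enn_le_suminf: "f i \<le> (\<Sum>k. f k :: ennreal)"
  using sum_le_suminf[OF summableI, of "{i}" f] by simp

context PSa begin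

lemma L_lt_mu: "\<Lambda> < \<mu>" using \<Lambda>_lt1 by (simp add: \<mu>_def)

lemma gfix_fin:
  assumes q: "q > 0" and b: "b \<in> Lp_space (ereal q) M"
  shows "is_fixpt N x a c \<alpha> (ereal q) M (\<lambda>_. 0) b (gfix b)"
proof -
  have bm: "b \<in> borel_measurable M" using b Lp_meas by auto
  have Xb: "Xq q b < \<infinity>" using Lp_fin[OF b] .
  have mu: "0 < \<mu>" "\<mu> < 1" using mu_props by auto
  have Xk: "Xq q ((A ^^ k) b) \<le> ennreal ((\<Lambda> ^ k) powr q) * Xq q b" for k
  proof (induction k)
    case 0 then show ?case by simp
  next
    case (Suc k)
    have "Xq q ((A ^^ Suc k) b) = Xq q (A ((A ^^ k) b))" by simp
    also have "\<dots> \<le> ennreal (\<Lambda> powr q) * Xq q ((A ^^ k) b)"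
      by (rule A_le[OF vv_meas[OF bm] q])
    also have "\<dots> \<le> ennreal (\<Lambda> powr q) * (ennreal ((\<Lambda> ^ k) powr q) * Xq q b)"
      by (rule mult_left_mono[OF Suc]) simp
    also have "\<dots> = ennreal ((\<Lambda> ^ Suc k) powr q) * Xq q b"
      by (simp add: powr_mult ennreal_mult mult.assoc)
    finally show ?case .
  qed
  define \<rho> where "\<rho> = (\<Lambda> / \<mu>) powr q"
  have \<rho>: "0 \<le> \<rho>" "\<rho> < 1"
  proof -
    show "0 \<le> \<rho>" by (simp add: \<rho>_def)
    have "(\<Lambda> / \<mu>) powr q < 1 powr q"
      using \<Lambda>_nonneg L_lt_mu mu q by (intro powr_less_mono2) (auto simp: divide_less_eq)
    then show "\<rho> < 1" by (simp add: \<rho>_def)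
  qed
  define T where "T k t = ennreal ((\<bar>(A ^^ k) b t\<bar> / \<mu> ^ k) powr q)" for k t
  define C where "C t = (\<Sum>k. T k t)" for t
  have Tm: "T k \<in> borel_measurable M" for k
    using vv_meas[OF bm, of k] unfolding T_def[abs_def] by measurable
  have Cm: "C \<in> borel_measurable M" unfolding C_def[abs_def] using Tm by measurable
  have Tint: "(\<integral>\<^sup>+t. T k t \<partial>M) \<le> ennreal (\<rho> ^ k) * Xq q b" for k
  proof -
    have "(\<integral>\<^sup>+t. T k t \<partial>M) = (\<integral>\<^sup>+t. ennreal ((1 / \<mu> ^ k) powr q) * ennreal (\<bar>(A ^^ k) b t\<bar> powr q) \<partial>M)"
    proof (rule nn_integral_cong)
      fix t
      have "\<bar>(A ^^ k) b t\<bar> / \<mu> ^ k = (1 / \<mu> ^ k) * \<bar>(A ^^ k) b t\<bar>" by simp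
      then show "T k t = ennreal ((1 / \<mu> ^ k) powr q) * ennreal (\<bar>(A ^^ k) b t\<bar> powr q)"
        unfolding T_def by (simp only: powr_mult) (simp add: ennreal_mult)
    qed
    also have "\<dots> = ennreal ((1 / \<mu> ^ k) powr q) * Xq q ((A ^^ k) b)"
      by (rule nn_integral_cmult) (use vv_meas[OF bm] in measurable)
    also have "\<dots> \<le> ennreal ((1 / \<mu> ^ k) powr q) * (ennreal ((\<Lambda> ^ k) powr q) * Xq q b)"
      by (rule mult_left_mono[OF Xk]) simp
    also have "\<dots> = ennreal ((1 / \<mu> ^ k) powr q * (\<Lambda> ^ k) powr q) * Xq q b"
      by (simp add: ennreal_mult mult.assoc)
    also have "(1 / \<mu> ^ k) powr q * (\<Lambda> ^ k) powr q = \<rho> ^ k"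
    proof -
      have "(1 / \<mu> ^ k) powr q * (\<Lambda> ^ k) powr q = ((1 / \<mu> ^ k) * \<Lambda> ^ k) powr q" by (rule powr_mult[symmetric])
      also have "(1 / \<mu> ^ k) * \<Lambda> ^ k = (\<Lambda> / \<mu>) ^ k" by (simp add: power_divide)
      finally show ?thesis by (simp add: \<rho>_def pow_powr)
    qed
    finally show ?thesis .
  qed
  have "(\<integral>\<^sup>+t. C t \<partial>M) = (\<Sum>k. (\<integral>\<^sup>+t. T k t \<partial>M))"
    unfolding C_def by (rule nn_integral_suminf[OF Tm])
  also have "\<dots> \<le> (\<Sum>k. ennreal (\<rho> ^ k) * Xq q b)"
    by (rule suminf_le[OF Tint summableI summableI])
  also have "\<dots> = (\<Sum>k. ennreal (\<rho> ^ k)) * Xq q b" by simp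
  also have "(\<Sum>k. ennreal (\<rho> ^ k)) = ennreal (1 / (1 - \<rho>))"
    by (rule suminf_ennreal_eq) (use \<rho> in \<open>auto intro: geometric_sums\<close>)
  finally have Cint: "(\<integral>\<^sup>+t. C t \<partial>M) \<le> ennreal (1 / (1 - \<rho>)) * Xq q b" .
  have Cfin: "(\<integral>\<^sup>+t. C t \<partial>M) < \<infinity>"
    using Cint Xb by (simp add: ennreal_mult_less_top le_less_trans)
  have aeC: "AE t in M. C t \<noteq> \<infinity>"
    by (rule nn_integral_PInf_AE[OF Cm]) (use Cfin in simp)
  define K where "K t = enn2real (C t) powr (1 / q)" for t
  have bnd: "AE t in M. \<forall>k. \<bar>(A ^^ k) b t\<bar> \<le> K t * \<mu> ^ k"
    using aeC
  proof (rule eventually_mono)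
    fix t assume Ct: "C t \<noteq> \<infinity>"
    show "\<forall>k. \<bar>(A ^^ k) b t\<bar> \<le> K t * \<mu> ^ k"
    proof
      fix k
      let ?z = "\<bar>(A ^^ k) b t\<bar> / \<mu> ^ k"
      have z0: "0 \<le> ?z" using mu by simp
      have "T k t \<le> C t" unfolding C_def by (rule enn_le_suminf)
      also have "C t = ennreal (enn2real (C t))" using Ct by (simp add: less_top)
      finally have "?z powr q \<le> enn2real (C t)" unfolding T_def by simp
      then have "(?z powr q) powr (1 / q) \<le> K t" unfolding K_def using q by (intro powr_mono2) auto
      moreover have "(?z powr q) powr (1 / q) = ?z" using z0 q mu by (simp add: powr_powr powr_one)
      ultimately have "?z \<le> K t" by simp
      then show "\<bar>(A ^^ k) b t\<bar> \<le> K t * \<mu> ^ k" using mu by (simp add: divide_le_eq)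
    qed
  qed
  have sm: "AE t in M. summable (\<lambda>k. \<bar>(A ^^ k) b t\<bar>)"
    using bnd
  proof (rule eventually_mono)
    fix t assume "\<forall>k. \<bar>(A ^^ k) b t\<bar> \<le> K t * \<mu> ^ k"
    then show "summable (\<lambda>k. \<bar>(A ^^ k) b t\<bar>)"
      using geom_lemma(1)[of "\<lambda>k. (A ^^ k) b t" "K t" \<mu>] mu by simp
  qed
  have gb: "AE t in M. ennreal (\<bar>gfix b t\<bar> powr q) \<le> ennreal ((1 / (1 - \<mu>)) powr q) * C t"
    using bnd aeC
  proof (eventually_elim)
    case (elim t)
    have "\<bar>\<Sum>k. (A ^^ Suc k) b t\<bar> \<le> K t / (1 - \<mu>)"
      using geom_lemma(2)[of "\<lambda>k. (A ^^ k) b t" "K t" \<mu>] elim(1) mu by simp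
    then have "\<bar>gfix b t\<bar> powr q \<le> (K t / (1 - \<mu>)) powr q"
      using q by (intro powr_mono2) (auto simp: gfix_def)
    also have "(K t / (1 - \<mu>)) powr q = (1 / (1 - \<mu>)) powr q * enn2real (C t)"
    proof -
      have "(K t / (1 - \<mu>)) powr q = ((1 / (1 - \<mu>)) * K t) powr q" by simp
      also have "\<dots> = (1 / (1 - \<mu>)) powr q * K t powr q" by (rule powr_mult)
      also have "K t powr q = enn2real (C t)" unfolding K_def using q by (simp add: powr_powr powr_one)
      finally show ?thesis .
    qed
    finally have "\<bar>gfix b t\<bar> powr q \<le> (1 / (1 - \<mu>)) powr q * enn2real (C t)" .
    then have "ennreal (\<bar>gfix b t\<bar> powr q) \<le> ennreal ((1 / (1 - \<mu>)) powr q * enn2real (C t))"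
      by (rule ennreal_leI)
    also have "\<dots> = ennreal ((1 / (1 - \<mu>)) powr q) * C t"
      using elim(2) by (simp add: ennreal_mult less_top)
    finally show ?case .
  qed
  have gm: "gfix b \<in> borel_measurable M" using gfix_meas[OF bm] .
  have "Xq q (gfix b) \<le> (\<integral>\<^sup>+t. ennreal ((1 / (1 - \<mu>)) powr q) * C t \<partial>M)"
    by (rule nn_integral_mono_AE[OF gb])
  also have "\<dots> = ennreal ((1 / (1 - \<mu>)) powr q) * (\<integral>\<^sup>+t. C t \<partial>M)"
    by (rule nn_integral_cmult[OF Cm])
  also have "\<dots> < \<infinity>" using Cfin by (simp add: ennreal_mult_less_top)
  finally have Xg: "Xq q (gfix b) < \<infinity>" .
  have "integrable M (\<lambda>t. \<bar>gfix b t\<bar> powr q)"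
    unfolding integrable_iff_bounded using gm Xg by simp
  then have "gfix b \<in> Lp_space (ereal q) M" using gm by (simp add: Lp_space_def)
  then show ?thesis using gfix_fix[OF bm sm] by (simp add: is_fixpt_def)
qed

end


context PSa begin

lemma p_cases:
  assumes "0 < p"
  obtains (inf) "p = \<infinity>" | (fin) q where "p = ereal q" "0 < q"
  using assms by (cases p) auto

lemma exists_fix:
  assumes p: "0 < p" and b: "b \<in> Lp_space p M"
  shows "is_fixpt N x a c \<alpha> p M (\<lambda>_. 0) b (starT N x a c \<alpha> p M (\<lambda>_. 0) b)"
proof -
  have "\<exists>g. is_fixpt N x a c \<alpha> p M (\<lambda>_. 0) b g"
    using p
  proof (cases rule: p_cases)
    case inf then show ?thesis using gfix_inf b by blast
  next
    case (fin q) then show ?thesis using gfix_fin b by blast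
  qed
  then show ?thesis unfolding starT_def by (rule someI_ex)
qed

lemma part2_all:
  assumes p: "0 < p" and b: "b \<in> Lp_space p M" and fx: "is_fixpt N x a c \<alpha> p M (\<lambda>_. 0) b g"
  shows "Lp_size p M g \<le> (if 1 \<le> p then \<Lambda> else \<Lambda> powr real_of_ereal p) * Lp_size p M (\<lambda>t. g t - b t)"
  using p
proof (cases rule: p_cases)
  case inf then show ?thesis using part2_inf b fx by simp
next
  case (fin q) show ?thesis unfolding fin(1) by (rule part2_fin[OF fin(2) b[unfolded fin(1)] fx[unfolded fin(1)]])
qed

lemma part1_all:
  assumes p: "0 < p" and b: "b \<in> Lp_space p M" and fx: "is_fixpt N x a c \<alpha> p M (\<lambda>_. 0) b g"
    and ex: "\<forall>n\<in>{1..N}. \<forall>t\<in>I. \<bar>\<alpha> n t\<bar> = \<Lambda>"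
  shows "Lp_size p M g = (if 1 \<le> p then \<Lambda> else \<Lambda> powr real_of_ereal p) * Lp_size p M (\<lambda>t. g t - b t)"
  using p
proof (cases rule: p_cases)
  case inf then show ?thesis using part1_inf b fx ex by simp
next
  case (fin q) show ?thesis unfolding fin(1) by (rule part1_fin[OF fin(2) b[unfolded fin(1)] fx[unfolded fin(1)] ex])
qed

lemma partC_all:
  assumes p: "0 < p"
  shows "\<exists>C. \<forall>b g. b \<in> Lp_space p M \<and> Lp_size p M b \<le> 1 \<and> is_fixpt N x a c \<alpha> p M (\<lambda>_. 0) b g
           \<longrightarrow> Lp_size p M (\<lambda>t. g t - b t) \<le> C"
  using p
proof (cases rule: p_cases)
  case inf then show ?thesis using partC_inf by blast
next
  case (fin q) then show ?thesis using partC_fin by blast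
qed

lemma zero_Lp:
  assumes p: "0 < p"
  shows "(\<lambda>_. 0) \<in> Lp_space p M" "Lp_size p M (\<lambda>_. 0) \<le> 1"
proof -
  have e0: "esssup M (\<lambda>t. ereal 0) = ereal 0" by (rule esssup_const[OF M_pos])
  show "(\<lambda>_. 0) \<in> Lp_space p M"
    using p
  proof (cases rule: p_cases)
    case inf then show ?thesis using e0 by (simp add: Lp_space_def)
  next
    case (fin q) then show ?thesis by (simp add: Lp_space_def)
  qed
  show "Lp_size p M (\<lambda>_. 0) \<le> 1"
    using p
  proof (cases rule: p_cases)
    case inf then show ?thesis using e0 by (simp add: Lp_size_def)
  next
    case (fin q) then show ?thesis using Lp_size_fin[of "\<lambda>_. 0" q] by simp
  qed
qed

lemma op_part:
  assumes p: "0 < p"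
  defines "P \<equiv> starT N x a c \<alpha> p M (\<lambda>_. 0)"
  shows "op_size p M P \<le> (if 1 \<le> p then \<Lambda> else \<Lambda> powr real_of_ereal p) * op_size p M (\<lambda>b t. P b t - b t)"
proof -
  let ?L = "(if 1 \<le> p then \<Lambda> else \<Lambda> powr real_of_ereal p)"
  let ?S1 = "{Lp_size p M (P b) | b. b \<in> Lp_space p M \<and> Lp_size p M b \<le> 1}"
  let ?S2 = "{Lp_size p M ((\<lambda>b t. P b t - b t) b) | b. b \<in> Lp_space p M \<and> Lp_size p M b \<le> 1}"
  have L0: "0 \<le> ?L" using \<Lambda>_nonneg by simp
  have fx: "is_fixpt N x a c \<alpha> p M (\<lambda>_. 0) b (P b)" if "b \<in> Lp_space p M" for b
    unfolding P_def by (rule exists_fix[OF p that])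
  obtain C where C: "\<And>b g. b \<in> Lp_space p M \<Longrightarrow> Lp_size p M b \<le> 1 \<Longrightarrow> is_fixpt N x a c \<alpha> p M (\<lambda>_. 0) b g
           \<Longrightarrow> Lp_size p M (\<lambda>t. g t - b t) \<le> C"
    using partC_all[OF p] by blast
  have bdd: "bdd_above ?S2"
    unfolding bdd_above_def using C fx by fastforce
  have ne: "?S1 \<noteq> {}" using zero_Lp[OF p] by blast
  have "Sup ?S1 \<le> ?L * Sup ?S2"
  proof (rule cSup_least[OF ne])
    fix z assume "z \<in> ?S1"
    then obtain b where b: "z = Lp_size p M (P b)" "b \<in> Lp_space p M" "Lp_size p M b \<le> 1" by blast
    have "z \<le> ?L * Lp_size p M (\<lambda>t. P b t - b t)"
      unfolding b(1) by (rule part2_all[OF p b(2) fx[OF b(2)]])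
    also have "Lp_size p M (\<lambda>t. P b t - b t) \<le> Sup ?S2"
      by (rule cSup_upper[OF _ bdd]) (use b in auto)
    then have "?L * Lp_size p M (\<lambda>t. P b t - b t) \<le> ?L * Sup ?S2"
      by (rule mult_left_mono) (rule L0)
    finally show "z \<le> ?L * Sup ?S2" .
  qed
  then show ?thesis unfolding op_size_def by simp
qed

lemma main:
  assumes p0: "0 < p"
  shows "((\<forall>n\<in>{1..N}. \<forall>t\<in>{x 0..x N}. \<alpha> n t \<in> {\<Lambda>, - \<Lambda>}) \<longrightarrow>
           (\<forall>b\<in>Lp_space p M. \<forall>g. is_fixpt N x a c \<alpha> p M (\<lambda>_. 0) b g \<longrightarrow>
              Lp_size p M g = (if 1 \<le> p then \<Lambda> else \<Lambda> powr real_of_ereal p) * Lp_size p M (\<lambda>t. g t - b t)))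
       \<and> ((\<forall>n\<in>{1..N}. \<exists>k. \<forall>t\<in>{x 0..x N}. \<alpha> n t = k) \<longrightarrow>
           (\<forall>b\<in>Lp_space p M. \<forall>g. is_fixpt N x a c \<alpha> p M (\<lambda>_. 0) b g \<longrightarrow>
              Lp_size p M g \<le> (if 1 \<le> p then \<Lambda> else \<Lambda> powr real_of_ereal p) * Lp_size p M (\<lambda>t. g t - b t))
           \<and> op_size p M (starT N x a c \<alpha> p M (\<lambda>_. 0)) \<le> (if 1 \<le> p then \<Lambda> else \<Lambda> powr real_of_ereal p)
                 * op_size p M (\<lambda>b t. starT N x a c \<alpha> p M (\<lambda>_. 0) b t - b t))"
proof -
  have p1: "(\<forall>n\<in>{1..N}. \<forall>t\<in>{x 0..x N}. \<alpha> n t \<in> {\<Lambda>, - \<Lambda>}) \<longrightarrow>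
           (\<forall>b\<in>Lp_space p M. \<forall>g. is_fixpt N x a c \<alpha> p M (\<lambda>_. 0) b g \<longrightarrow>
              Lp_size p M g = (if 1 \<le> p then \<Lambda> else \<Lambda> powr real_of_ereal p) * Lp_size p M (\<lambda>t. g t - b t))"
  proof (intro impI ballI allI)
    fix b g
    assume ex0: "\<forall>n\<in>{1..N}. \<forall>t\<in>{x 0..x N}. \<alpha> n t \<in> {\<Lambda>, - \<Lambda>}"
      and b: "b \<in> Lp_space p M" and fx: "is_fixpt N x a c \<alpha> p M (\<lambda>_. 0) b g"
    have ex: "\<forall>n\<in>{1..N}. \<forall>t\<in>I. \<bar>\<alpha> n t\<bar> = \<Lambda>"
    proof (intro ballI)
      fix n t assume n: "n \<in> {1..N}" and t: "t \<in> I"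
      have "\<alpha> n t \<in> {\<Lambda>, - \<Lambda>}" using ex0 n t by blast
      then have "\<alpha> n t = \<Lambda> \<or> \<alpha> n t = - \<Lambda>" by blast
      moreover have hL: "\<bar>\<Lambda>\<bar> = \<Lambda>" by (rule abs_of_nonneg[OF \<Lambda>_nonneg])
      ultimately show "\<bar>\<alpha> n t\<bar> = \<Lambda>"
      proof (elim disjE)
        assume h: "\<alpha> n t = \<Lambda>"
        have "\<bar>\<alpha> n t\<bar> = \<bar>\<Lambda>\<bar>" by (simp only: h)
        then show ?thesis by (rule trans[OF _ hL])
      next
        assume h: "\<alpha> n t = - \<Lambda>"
        have "\<bar>\<alpha> n t\<bar> = \<bar>- \<Lambda>\<bar>" by (simp only: h)
        also have "\<dots> = \<bar>\<Lambda>\<bar>" by (rule abs_minus_cancel)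
        finally show ?thesis by (rule trans[OF _ hL])
      qed
    qed
    show "Lp_size p M g = (if 1 \<le> p then \<Lambda> else \<Lambda> powr real_of_ereal p) * Lp_size p M (\<lambda>t. g t - b t)"
      by (rule part1_all[OF p0 b fx ex])
  qed
  have p2: "\<forall>b\<in>Lp_space p M. \<forall>g. is_fixpt N x a c \<alpha> p M (\<lambda>_. 0) b g \<longrightarrow>
              Lp_size p M g \<le> (if 1 \<le> p then \<Lambda> else \<Lambda> powr real_of_ereal p) * Lp_size p M (\<lambda>t. g t - b t)"
  proof (intro ballI allI impI)
    fix b g assume "b \<in> Lp_space p M" "is_fixpt N x a c \<alpha> p M (\<lambda>_. 0) b g"
    then show "Lp_size p M g \<le> (if 1 \<le> p then \<Lambda> else \<Lambda> powr real_of_ereal p) * Lp_size p M (\<lambda>t. g t - b t)"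
      by (rule part2_all[OF p0])
  qed
  note p3 = op_part[OF p0]
  show ?thesis
    apply (intro conjI impI)
      apply (rule mp[OF p1], assumption)
     apply (rule p2)
    apply (rule p3)
    done
qed

end

theorem proposition6p2:
  fixes N :: nat and x a c :: "nat \<Rightarrow> real" and \<alpha> :: "nat \<Rightarrow> real \<Rightarrow> real"
    and p :: ereal
  defines "M \<equiv> lebesgue_on {x 0..x N}"
  defines "\<Lambda> \<equiv> real_of_ereal (esssup M (\<lambda>t. ereal (Max ((\<lambda>n. \<bar>\<alpha> n t\<bar>) ` {1..N}))))"
  defines "\<Lambda>' \<equiv> (if 1 \<le> p then \<Lambda> else \<Lambda> powr real_of_ereal p)"
  defines "P \<equiv> starT N x a c \<alpha> p M (\<lambda>_. 0)"
  assumes N2: "2 \<le> N"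
    and part: "\<And>i. i < N \<Longrightarrow> x i < x (Suc i)"
    and L0: "\<And>n. n \<in> {1..N} \<Longrightarrow> a n * x 0 + c n = x (n - 1)"
    and LN: "\<And>n. n \<in> {1..N} \<Longrightarrow> a n * x N + c n = x n"
    and \<alpha>meas: "\<And>n. n \<in> {1..N} \<Longrightarrow> \<alpha> n \<in> borel_measurable M"
    and \<Lambda>lt1: "esssup M (\<lambda>t. ereal (Max ((\<lambda>n. \<bar>\<alpha> n t\<bar>) ` {1..N}))) < 1"
    and p0: "0 < p"
  shows "((\<forall>n\<in>{1..N}. \<forall>t\<in>{x 0..x N}. \<alpha> n t \<in> {\<Lambda>, - \<Lambda>}) \<longrightarrow>
           (\<forall>b\<in>Lp_space p M. \<forall>g. is_fixpt N x a c \<alpha> p M (\<lambda>_. 0) b g \<longrightarrow>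
              Lp_size p M g = \<Lambda>' * Lp_size p M (\<lambda>t. g t - b t)))
       \<and> ((\<forall>n\<in>{1..N}. \<exists>k. \<forall>t\<in>{x 0..x N}. \<alpha> n t = k) \<longrightarrow>
           (\<forall>b\<in>Lp_space p M. \<forall>g. is_fixpt N x a c \<alpha> p M (\<lambda>_. 0) b g \<longrightarrow>
              Lp_size p M g \<le> \<Lambda>' * Lp_size p M (\<lambda>t. g t - b t))
           \<and> op_size p M P \<le> \<Lambda>' * op_size p M (\<lambda>b t. P b t - b t))"
proof -
  interpret PSa N x a c \<alpha>
    by unfold_locales (use N2 part L0 LN \<alpha>meas \<Lambda>lt1 in \<open>simp_all add: M_def\<close>)
  show ?thesis
    unfolding M_def \<Lambda>'_def \<Lambda>_def P_def by (rule main[OF p0])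
qed


end
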